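(* On $A=\mathbb{C}_q[S^2]$ with its complex structure, equip $\mathcal{S}_+$ with the holomorphic structure $\overline{\partial}_{\mathcal{S}_+}(xf^+)=(\partial_-x)e^-a\otimes df^+-q^{-1}(\partial_-x)e^-c\otimes bf^+$ and the hermitian inner product $\langle xf^+,\overline{yf^+}\rangle=xy^*$. Then the Chern connection (the unique metric-preserving left connection whose $(0,1)$-part is $\overline\partial_{\mathcal S_+}$) is $$\nabla_{\mathcal{S}_+}(xf^+)=\pi{\rm d}x.a\otimes df^+-q^{-1}\,\pi{\rm d}x.c\otimes bf^+ ,$$ i.e. it coincides with the $q$-monopole connection on $\mathcal S_+$.
   Context: $q$ is real nonzero. $\mathbb{C}_q[SU_2]$ is the $*$-algebra generated by $a,b,c,d$ with $ba=qab$, $ca=qac$, $db=qbd$, $dc=qcd$, $bc=cb$, $da-ad=(q-q^{-1})bc$, $ad-q^{-1}bc=1$, graded by $|a|=|c|=1$, $|b|=|d|=-1$, with Woronowicz's left-covariant 3D calculus with left basis $e^0,e^\pm$ (degrees $0,\pm2$), $e^\pm x=q^{|x|}xe^\pm$, $(e^\pm)^*=-q^{\mp1}e^\mp$; $\pi$ kills $e^0$ and $\pi{\rm d}x=(\partial_+x)e^++(\partial_-x)e^-$. $\mathbb C_q[S^2]$ is the degree-0 subalgebra with $\Omega^1=\Omega^{1,0}\oplus\Omega^{0,1}$, $\Omega^{1,0}=\{fe^+:|f|=-2\}$, $\Omega^{0,1}=\{fe^-:|f|=2\}$, $\partial x=(\partial_+x)e^+$, $\overline\partial x=(\partial_-x)e^-$,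 ${\rm d}=\pi{\rm d}$, $\Omega^{0,2}=\Omega^{2,0}=0$. $\mathcal S_+=\{xf^+:x\in\mathbb C_q[SU_2],|x|=-1\}$ where $f^+$ is a formal symbol commuting with $\mathbb C_q[S^2]$; metric preservation and the conjugate module are as usual: $\overline{\mathcal S_+}$ has $a.\overline\phi=\overline{\phi.a^*}$, and $\nabla$ preserves $\langle,\rangle$ if ${\rm d}\langle\phi,\overline\psi\rangle=(\mathrm{id}\otimes\langle,\rangle)(\nabla\phi\otimes\overline\psi)+(\langle,\rangle\otimes\mathrm{id})(\phi\otimes\tilde\nabla\overline\psi)$, $\tilde\nabla(\overline\psi)=\overline g\otimes\kappa^*$ for $\nabla\psi=\kappa\otimes g$. *)

theory Defs
  imports Complex_Main "HOL-Library.Poly_Mapping"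
begin

datatype gen = GA | GB | GC | GD

datatype word = W "gen list"

fun unW :: "word \<Rightarrow> gen list" where "unW (W l) = l"

instantiation word :: monoid_add
begin
definition zero_word :: word where "zero_word = W []"
fun plus_word :: "word \<Rightarrow> word \<Rightarrow> word" where "plus_word (W x) (W y) = W (x @ y)"
instance
proof
  fix x y z :: word
  show "x + y + z = x + (y + z)" by (cases x; cases y; cases z) simp
  show "0 + x = x" by (cases x) (simp add: zero_word_def)
  show "x + 0 = x" by (cases x) (simp add: zero_word_def)
qed
end

text \<open>Free (noncommutative) complex algebra on the generators: finitely supported
  complex-valued functions on words, with convolution product.\<close>
type_synonym fa = "word \<Rightarrow>\<^sub>0 complex"

definition cst :: "complex \<Rightarrow> fa" where "cst c = Poly_Mapping.single 0 c"

definition wd :: "gen list \<Rightarrow> fa" where "wd l = Poly_Mapping.single (W l) 1"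

definition gA :: fa where "gA = wd [GA]"
definition gB :: fa where "gB = wd [GB]"
definition gC :: fa where "gC = wd [GC]"
definition gD :: fa where "gD = wd [GD]"

fun gdeg :: "gen \<Rightarrow> int" where
  "gdeg GA = 1" | "gdeg GB = -1" | "gdeg GC = 1" | "gdeg GD = -1"

definition wdeg :: "gen list \<Rightarrow> int" where "wdeg l = sum_list (map gdeg l)"

definition Qc :: "real \<Rightarrow> fa" where "Qc q = cst (complex_of_real q)"

definition rels :: "real \<Rightarrow> fa set" where
  "rels q = { gB * gA - Qc q * gA * gB,
              gC * gA - Qc q * gA * gC,
              gD * gB - Qc q * gB * gD,
              gD * gC - Qc q * gC * gD,
              gB * gC - gC * gB,
              gD * gA - gA * gD - (Qc q - cst (complex_of_real (1/q))) * gB * gC,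
              gA * gD - cst (complex_of_real (1/q)) * gB * gC - 1 }"

inductive_set relI :: "real \<Rightarrow> fa set" for q :: real where
  gen: "r \<in> rels q \<Longrightarrow> r \<in> relI q"
| zero: "0 \<in> relI q"
| add: "x \<in> relI q \<Longrightarrow> y \<in> relI q \<Longrightarrow> x + y \<in> relI q"
| lmul: "x \<in> relI q \<Longrightarrow> y * x \<in> relI q"
| rmul: "x \<in> relI q \<Longrightarrow> x * y \<in> relI q"

text \<open>Equality in C_q[SU_2].\<close>
definition eqq :: "real \<Rightarrow> fa \<Rightarrow> fa \<Rightarrow> bool" where
  "eqq q x y \<longleftrightarrow> x - y \<in> relI q"

definition homq :: "real \<Rightarrow> int \<Rightarrow> fa \<Rightarrow> bool" where
  "homq q n x \<longleftrightarrow> (\<exists>p. eqq q x p \<and> (\<forall>w\<in>Poly_Mapping.keys p. wdeg (unW w) = n))"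

fun starg :: "real \<Rightarrow> gen \<Rightarrow> fa" where
  "starg q GA = gD"
| "starg q GB = - (Qc q * gC)"
| "starg q GC = - (cst (complex_of_real (1/q)) * gB)"
| "starg q GD = gA"

fun starw :: "real \<Rightarrow> gen list \<Rightarrow> fa" where
  "starw q [] = 1"
| "starw q (g # l) = starw q l * starg q g"

definition starq :: "real \<Rightarrow> fa \<Rightarrow> fa" where
  "starq q p = (\<Sum>w\<in>Poly_Mapping.keys p. cst (cnj (Poly_Mapping.lookup p w)) * starw q (unW w))"

section \<open>The partial derivatives of the 3D calculus: twisted derivations
  del_+ (xy) = (del_+ x) q^{|y|} y + x del_+ y, with
  del_+ a = b, del_+ c = d, del_+ b = del_+ d = 0,
  del_- b = q a, del_- d = q c, del_- a = del_- c = 0\<close>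

fun dg :: "bool \<Rightarrow> real \<Rightarrow> gen \<Rightarrow> fa" where
  "dg True q GA = gB"
| "dg True q GC = gD"
| "dg True q GB = 0"
| "dg True q GD = 0"
| "dg False q GB = Qc q * gA"
| "dg False q GD = Qc q * gC"
| "dg False q GA = 0"
| "dg False q GC = 0"

fun dw :: "bool \<Rightarrow> real \<Rightarrow> gen list \<Rightarrow> fa" where
  "dw s q [] = 0"
| "dw s q (g # l) = cst (complex_of_real (q powi wdeg l)) * dg s q g * wd l + wd [g] * dw s q l"

text \<open>dfree True = del_+, dfree False = del_-.\<close>
definition dfree :: "bool \<Rightarrow> real \<Rightarrow> fa \<Rightarrow> fa" where
  "dfree s q p = (\<Sum>w\<in>Poly_Mapping.keys p. cst (Poly_Mapping.lookup p w) * dw s q (unW w))"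

section \<open>Horizontal one-forms f_+ e^+ + f_- e^- (represented as pairs (f_+, f_-))\<close>

type_synonym form = "fa \<times> fa"

text \<open>pi d x = (del_+ x) e^+ + (del_- x) e^-\<close>
definition pid :: "real \<Rightarrow> fa \<Rightarrow> form" where
  "pid q x = (dfree True q x, dfree False q x)"

definition fadd :: "form \<Rightarrow> form \<Rightarrow> form" where
  "fadd w v = (fst w + fst v, snd w + snd v)"

definition fsum :: "form list \<Rightarrow> form" where
  "fsum ws = foldr fadd ws (0, 0)"

definition lmulF :: "fa \<Rightarrow> form \<Rightarrow> form" where
  "lmulF h w = (h * fst w, h * snd w)"

text \<open>Right multiplication by an element y homogeneous of degree n:
  (f e^\<pm>) y = q^n f y e^\<pm>.\<close>
definition rmulF :: "real \<Rightarrow> int \<Rightarrow> form \<Rightarrow> fa \<Rightarrow> form" where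
  "rmulF q n w y = (cst (complex_of_real (q powi n)) * fst w * y,
                    cst (complex_of_real (q powi n)) * snd w * y)"

text \<open>Star on Omega^1(S^2): with (e^\<pm>)* = -q^{\<mp>1} e^\<mp> and the commutation rule,
  (f e^+)* = -q f* e^- for |f| = -2 and (g e^-)* = -q^{-1} g* e^+ for |g| = 2.\<close>
definition fstar :: "real \<Rightarrow> form \<Rightarrow> form" where
  "fstar q w = (- (cst (complex_of_real (1/q)) * starq q (snd w)), - (Qc q * starq q (fst w)))"

definition feq :: "real \<Rightarrow> form \<Rightarrow> form \<Rightarrow> bool" where
  "feq q w v \<longleftrightarrow> eqq q (fst w) (fst v) \<and> eqq q (snd w) (snd v)"

text \<open>Elements of C_q[S^2], of S_+ (x f^+ with |x| = -1, represented by x), and of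
  Omega^1(S^2) = Omega^{1,0} + Omega^{0,1}.\<close>
definition isA :: "real \<Rightarrow> fa \<Rightarrow> bool" where "isA q h \<longleftrightarrow> homq q 0 h"
definition isS :: "real \<Rightarrow> fa \<Rightarrow> bool" where "isS q s \<longleftrightarrow> homq q (-1) s"
definition isF :: "real \<Rightarrow> form \<Rightarrow> bool" where
  "isF q w \<longleftrightarrow> homq q (-2) (fst w) \<and> homq q 2 (snd w)"

definition proj01 :: "form \<Rightarrow> form" where "proj01 w = (0, snd w)"

text \<open>Finite sums of elementary tensors w \<otimes> x f^+, as lists of pairs.\<close>
type_synonym tens = "(form \<times> fa) list"

definition isT :: "real \<Rightarrow> tens \<Rightarrow> bool" where
  "isT q T \<longleftrightarrow> (\<forall>(w, s)\<in>set T. isF q w \<and> isS q s)"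

text \<open>A-balanced complex-bilinear functionals Omega^1(S^2) x S_+ \<rightarrow> C (i.e. the linear
  functionals on the tensor product over A).\<close>
definition balanced :: "real \<Rightarrow> (form \<Rightarrow> fa \<Rightarrow> complex) \<Rightarrow> bool" where
  "balanced q \<phi> \<longleftrightarrow>
     (\<forall>w w' s s'. isF q w \<and> isF q w' \<and> isS q s \<and> isS q s' \<and> feq q w w' \<and> eqq q s s'
        \<longrightarrow> \<phi> w s = \<phi> w' s') \<and>
     (\<forall>w w' s. isF q w \<and> isF q w' \<and> isS q s \<longrightarrow> \<phi> (fadd w w') s = \<phi> w s + \<phi> w' s) \<and>
     (\<forall>w s s'. isF q w \<and> isS q s \<and> isS q s' \<longrightarrow> \<phi> w (s + s') = \<phi> w s + \<phi> w s') \<and>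
     (\<forall>c w s. isF q w \<and> isS q s \<longrightarrow> \<phi> (lmulF (cst c) w) s = c * \<phi> w s) \<and>
     (\<forall>c w s. isF q w \<and> isS q s \<longrightarrow> \<phi> w (cst c * s) = c * \<phi> w s) \<and>
     (\<forall>w h s. isF q w \<and> isA q h \<and> isS q s \<longrightarrow> \<phi> (rmulF q 0 w h) s = \<phi> w (h * s))"

text \<open>Equality in Omega^1(S^2) \<otimes>_A S_+ (two elements of a complex vector space are equal
  iff all linear functionals agree on them).\<close>
definition teq :: "real \<Rightarrow> tens \<Rightarrow> tens \<Rightarrow> bool" where
  "teq q T T' \<longleftrightarrow> isT q T \<and> isT q T' \<and>
     (\<forall>\<phi>. balanced q \<phi> \<longrightarrow>
        sum_list (map (\<lambda>(w, s). \<phi> w s) T) = sum_list (map (\<lambda>(w, s). \<phi> w s) T'))"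

definition hinner :: "real \<Rightarrow> fa \<Rightarrow> fa \<Rightarrow> fa" where
  "hinner q x y = x * starq q y"

definition left_connection :: "real \<Rightarrow> (fa \<Rightarrow> tens) \<Rightarrow> bool" where
  "left_connection q N \<longleftrightarrow>
     (\<forall>s s'. isS q s \<and> isS q s' \<and> eqq q s s' \<longrightarrow> teq q (N s) (N s')) \<and>
     (\<forall>s s'. isS q s \<and> isS q s' \<longrightarrow> teq q (N (s + s')) (N s @ N s')) \<and>
     (\<forall>c s. isS q s \<longrightarrow> teq q (N (cst c * s)) (map (\<lambda>(w, t). (lmulF (cst c) w, t)) (N s))) \<and>
     (\<forall>h s. isA q h \<and> isS q s \<longrightarrow>
        teq q (N (h * s)) ((pid q h, s) # map (\<lambda>(w, t). (lmulF h w, t)) (N s)))"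

text \<open>nabla preserves the hermitian metric:
  d<phi, conj psi> = (id \<otimes> <,>)(nabla phi \<otimes> conj psi) + (<,> \<otimes> id)(phi \<otimes> tilde nabla conj psi).\<close>
definition metric_preserving :: "real \<Rightarrow> (fa \<Rightarrow> tens) \<Rightarrow> bool" where
  "metric_preserving q N \<longleftrightarrow>
     (\<forall>x y. isS q x \<and> isS q y \<longrightarrow>
        feq q (pid q (hinner q x y))
          (fadd (fsum (map (\<lambda>(w, t). rmulF q 0 w (hinner q t y)) (N x)))
                (fsum (map (\<lambda>(w, t). lmulF (hinner q x t) (fstar q w)) (N y)))))"

text \<open>The holomorphic structure
  dbar(x f^+) = (del_- x) e^- a \<otimes> d f^+ - q^{-1} (del_- x) e^- c \<otimes> b f^+.\<close>
definition dbarS :: "real \<Rightarrow> fa \<Rightarrow> tens" where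
  "dbarS q x = [ (rmulF q 1 (0, dfree False q x) gA, gD),
                 (lmulF (cst (complex_of_real (- 1/q))) (rmulF q 1 (0, dfree False q x) gC), gB) ]"

definition has_01_part :: "real \<Rightarrow> (fa \<Rightarrow> tens) \<Rightarrow> bool" where
  "has_01_part q N \<longleftrightarrow>
     (\<forall>s. isS q s \<longrightarrow> teq q (map (\<lambda>(w, t). (proj01 w, t)) (N s)) (dbarS q s))"

definition chern_conditions :: "real \<Rightarrow> (fa \<Rightarrow> tens) \<Rightarrow> bool" where
  "chern_conditions q N \<longleftrightarrow> left_connection q N \<and> metric_preserving q N \<and> has_01_part q N"

text \<open>The q-monopole connection
  nabla(x f^+) = pi dx . a \<otimes> d f^+ - q^{-1} pi dx . c \<otimes> b f^+.\<close>
definition monopole :: "real \<Rightarrow> fa \<Rightarrow> tens" where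
  "monopole q x = [ (rmulF q 1 (pid q x) gA, gD),
                    (lmulF (cst (complex_of_real (- 1/q))) (rmulF q 1 (pid q x) gC), gB) ]"

end

theory Submission
  imports Defs
begin

lemma word_plus_W: "W x + W y = W (x @ y)" by simp
lemma word_zero_W: "(0::word) = W []" by (simp add: zero_word_def)

lemma cst_mult: "cst (a*b) = cst a * cst b"
  by (simp add: cst_def mult_single)
lemma cst_add: "cst (a+b) = cst a + cst b" by (simp add: cst_def single_add)
lemma cst_diff: "cst (a-b) = cst a - cst b" by (simp add: cst_def single_diff)
lemma cst_uminus: "cst (-a) = - cst a" by (simp add: cst_def single_uminus)
lemma cst_0[simp]: "cst 0 = 0" by (simp add: cst_def)
lemma cst_1[simp]: "cst 1 = 1" by (simp add: cst_def)

lemma update_single_add: "a \<notin> Poly_Mapping.keys f \<Longrightarrow> Poly_Mapping.update a b f = Poly_Mapping.single a b + f"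
  by (rule poly_mapping_eqI) (auto simp: lookup_update lookup_add lookup_single when_def in_keys_iff)

lemma fa_induct[case_names zero step]:
  assumes "P 0"
  and "\<And>k v p. k \<notin> Poly_Mapping.keys p \<Longrightarrow> v \<noteq> 0 \<Longrightarrow> P p \<Longrightarrow> P (Poly_Mapping.single k v + p)"
  shows "P (p::'a \<Rightarrow>\<^sub>0 'b::monoid_add)"
  using assms by (induction p rule: update_induct) (simp_all add: update_single_add)

lemma cst_single: "cst c * Poly_Mapping.single k v = Poly_Mapping.single k (c*v)"
  by (simp add: cst_def mult_single)
lemma single_cst: "Poly_Mapping.single k v * cst c = Poly_Mapping.single k (v*c)"
  by (simp add: cst_def mult_single)

lemma cst_comm: "cst c * p = p * cst c"
proof (induction p rule: fa_induct)
  case zero then show ?case by simp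
next
  case (step k v p) then show ?case by (simp add: distrib_left distrib_right cst_single single_cst mult.commute)
qed

lemma cst_comm2: "p * (cst c * x) = cst c * (p * x)"
  by (metis cst_comm mult.assoc)

lemma lookup_cst_mult: "Poly_Mapping.lookup (cst c * p) k = c * Poly_Mapping.lookup p k"
proof (induction p rule: fa_induct)
  case zero then show ?case by simp
next
  case (step k' v p) then show ?case by (simp add: distrib_left cst_single lookup_add lookup_single when_def)
qed

lemma keys_cst_mult: "Poly_Mapping.keys (cst c * p) \<subseteq> Poly_Mapping.keys p"
  by (auto simp: in_keys_iff lookup_cst_mult)

lemma wd_mult: "wd l1 * wd l2 = wd (l1 @ l2)"
  by (simp add: wd_def mult_single)
lemma wd_Nil: "wd [] = 1"
  by (simp add: wd_def zero_word_def[symmetric])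

lemma mult_cst_right: "NO_MATCH (cst a) x \<Longrightarrow> x * cst c = cst c * x" by (simp add: cst_comm)
lemma cst_cst: "cst a * cst b = cst (a*b)" by (simp add: cst_mult)
lemma cst_cst2: "cst a * (cst b * x) = cst (a*b) * x" by (simp add: cst_mult mult.assoc)
lemma cst_comm3: "NO_MATCH (cst a) p \<Longrightarrow> p * (cst c * x) = cst c * (p * x)" by (simp add: cst_comm2)
lemmas cstn = cst_cst cst_cst2 mult_cst_right cst_comm3 mult.assoc

lemma "cst a * x * cst b * y * cst c = cst (a*b*c) * (x * y)"
  by (simp add: cstn mult.commute mult.left_commute)

definition ext :: "(complex \<Rightarrow> complex) \<Rightarrow> (gen list \<Rightarrow> fa) \<Rightarrow> fa \<Rightarrow> fa" where
  "ext \<sigma> f p = (\<Sum>w\<in>Poly_Mapping.keys p. cst (\<sigma> (Poly_Mapping.lookup p w)) * f (unW w))"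

definition addh :: "(complex \<Rightarrow> complex) \<Rightarrow> bool" where
  "addh \<sigma> \<longleftrightarrow> (\<forall>a b. \<sigma> (a+b) = \<sigma> a + \<sigma> b) \<and> (\<forall>a b. \<sigma> (a*b) = \<sigma> a * \<sigma> b)"

lemma addh_id: "addh (\<lambda>x. x)" by (simp add: addh_def)
lemma addh_cnj: "addh cnj" by (simp add: addh_def)

lemma addh_0: "addh \<sigma> \<Longrightarrow> \<sigma> 0 = 0"
  unfolding addh_def by (metis add_cancel_left_right)

lemma ext_superset:
  assumes "addh \<sigma>" "finite S" "Poly_Mapping.keys p \<subseteq> S"
  shows "ext \<sigma> f p = (\<Sum>w\<in>S. cst (\<sigma> (Poly_Mapping.lookup p w)) * f (unW w))"
  unfolding ext_def
  by (rule sum.mono_neutral_left) (use assms addh_0[OF assms(1)] in \<open>auto simp: in_keys_iff\<close>)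

lemma ext_zero[simp]: "ext \<sigma> f 0 = 0" by (simp add: ext_def)

lemma ext_single_add:
  assumes "addh \<sigma>"
  shows "ext \<sigma> f (Poly_Mapping.single k v + p) = cst (\<sigma> v) * f (unW k) + ext \<sigma> f p"
proof -
  let ?S = "insert k (Poly_Mapping.keys p)"
  have k1: "Poly_Mapping.keys (Poly_Mapping.single k v + p) \<subseteq> ?S"
    using keys_add[of "Poly_Mapping.single k v" p] by (cases "v = 0") auto
  have "ext \<sigma> f (Poly_Mapping.single k v + p) = (\<Sum>w\<in>?S. cst (\<sigma> (Poly_Mapping.lookup (Poly_Mapping.single k v + p) w)) * f (unW w))"
    by (rule ext_superset[OF assms]) (use k1 in auto)
  also have "\<dots> = (\<Sum>w\<in>?S. (if k = w then cst (\<sigma> v) * f (unW w) else 0) + cst (\<sigma> (Poly_Mapping.lookup p w)) * f (unW w))"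
    by (rule sum.cong) (use assms addh_0[OF assms] in \<open>auto simp: addh_def lookup_add lookup_single when_def cst_add distrib_right\<close>)
  also have "\<dots> = cst (\<sigma> v) * f (unW k) + ext \<sigma> f p"
  proof -
    have "ext \<sigma> f p = (\<Sum>w\<in>?S. cst (\<sigma> (Poly_Mapping.lookup p w)) * f (unW w))"
      by (rule ext_superset[OF assms]) auto
    then show ?thesis by (simp add: sum.distrib)
  qed
  finally show ?thesis .
qed

lemma ext_single: "addh \<sigma> \<Longrightarrow> ext \<sigma> f (Poly_Mapping.single k v) = cst (\<sigma> v) * f (unW k)"
  using ext_single_add[of \<sigma> f k v 0] by simp

lemma ext_add: "addh \<sigma> \<Longrightarrow> ext \<sigma> f (p + p') = ext \<sigma> f p + ext \<sigma> f p'"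
proof (induction p rule: fa_induct)
  case zero then show ?case by simp
next
  case (step k v p) then show ?case by (simp add: add.assoc ext_single_add)
qed

lemma ext_uminus: "addh \<sigma> \<Longrightarrow> ext \<sigma> f (- p) = - ext \<sigma> f p"
  using ext_add[of \<sigma> f p "-p"] by (simp, metis neg_eq_iff_add_eq_0)

lemma ext_diff: "addh \<sigma> \<Longrightarrow> ext \<sigma> f (p - p') = ext \<sigma> f p - ext \<sigma> f p'"
  using ext_add[of \<sigma> f p "-p'"] ext_uminus[of \<sigma> f p'] by simp

lemma ext_cst: "addh \<sigma> \<Longrightarrow> ext \<sigma> f (cst c * p) = cst (\<sigma> c) * ext \<sigma> f p"
proof (induction p rule: fa_induct)
  case zero then show ?case by simp
next
  case (step k v p)
  have "ext \<sigma> f (cst c * (Poly_Mapping.single k v + p)) = ext \<sigma> f (Poly_Mapping.single k (c*v) + cst c * p)"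
    by (simp add: distrib_left cst_single)
  also have "\<dots> = cst (\<sigma> (c*v)) * f (unW k) + cst (\<sigma> c) * ext \<sigma> f p"
    using step by (simp add: ext_single_add)
  also have "\<dots> = cst (\<sigma> c) * ext \<sigma> f (Poly_Mapping.single k v + p)"
    using step by (simp add: ext_single_add addh_def cst_mult distrib_left mult.assoc)
  finally show ?case .
qed

lemma single_W: "Poly_Mapping.single (W l) v = cst v * wd l"
  by (simp add: wd_def cst_single)

lemma fa_bilinear:
  fixes F G :: "fa \<Rightarrow> fa \<Rightarrow> fa"
  assumes "\<And>y. F 0 y = G 0 y" "\<And>x. F x 0 = G x 0"
   and "\<And>x x' y. F (x + x') y = F x y + F x' y" "\<And>x x' y. G (x + x') y = G x y + G x' y"
   and "\<And>x y y'. F x (y + y') = F x y + F x y'" "\<And>x y y'. G x (y + y') = G x y + G x y'"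
   and "\<And>l v l' v'. F (cst v * wd l) (cst v' * wd l') = G (cst v * wd l) (cst v' * wd l')"
  shows "F x y = G x y"
proof (induction x rule: fa_induct)
  case zero then show ?case using assms(1) .
next
  case (step k v p)
  obtain l where k: "k = W l" by (cases k)
  have "F (Poly_Mapping.single k v) y = G (Poly_Mapping.single k v) y"
  proof (induction y rule: fa_induct)
    case zero then show ?case using assms(2) .
  next
    case (step k' v' p')
    obtain l' where k': "k' = W l'" by (cases k')
    show ?case using step assms(5,6,7) by (simp add: k k' single_W)
  qed
  then show ?case using step assms(3,4) by simp
qed

definition tw :: "real \<Rightarrow> fa \<Rightarrow> fa" where
  "tw q p = ext (\<lambda>x. x) (\<lambda>l. cst (complex_of_real (q powi wdeg l)) * wd l) p"

lemma dfree_ext: "dfree s q p = ext (\<lambda>x. x) (dw s q) p" by (simp add: dfree_def ext_def)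
lemma starq_ext: "starq q p = ext cnj (starw q) p" by (simp add: starq_def ext_def)

lemma wdeg_append[simp]: "wdeg (l1 @ l2) = wdeg l1 + wdeg l2" by (simp add: wdeg_def)
lemma wdeg_Cons[simp]: "wdeg (g # l) = gdeg g + wdeg l" by (simp add: wdeg_def)
lemma wdeg_Nil[simp]: "wdeg [] = 0" by (simp add: wdeg_def)

lemma powi_add_c: "(q::real) \<noteq> 0 \<Longrightarrow> complex_of_real (q powi (a+b)) = complex_of_real (q powi a) * complex_of_real (q powi b)"
  by (simp add: power_int_add)

lemma powi_add_c2: "(q::real) \<noteq> 0 \<Longrightarrow> (complex_of_real q) powi (a+b) = (complex_of_real q) powi a * (complex_of_real q) powi b"
  by (simp add: power_int_add)

lemma wd_Cons: "NO_MATCH [] l \<Longrightarrow> wd (g # l) = wd [g] * wd l" by (simp add: wd_mult)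
lemma wd_append: "wd (l1 @ l2) = wd l1 * wd l2" by (simp add: wd_mult)

lemma dw_append:
  assumes "q \<noteq> 0"
  shows "dw s q (l1 @ l2) = dw s q l1 * (cst (complex_of_real (q powi wdeg l2)) * wd l2) + wd l1 * dw s q l2"
proof (induction l1)
  case Nil then show ?case by (simp add: wd_Nil)
next
  case (Cons g l1)
  have "dw s q ((g # l1) @ l2) = cst (complex_of_real (q powi (wdeg l1 + wdeg l2))) * dg s q g * wd (l1 @ l2) + wd [g] * dw s q (l1 @ l2)"
    by simp
  also have "\<dots> = dw s q (g # l1) * (cst (complex_of_real (q powi wdeg l2)) * wd l2) + wd (g # l1) * dw s q l2"
    using Cons by (simp add: powi_add_c2[OF assms] wd_append wd_Cons distrib_left distrib_right cstn)
  finally show ?case .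
qed

lemma dfree_wd: "dfree s q (cst v * wd l) = cst v * dw s q l"
  by (simp add: dfree_ext flip: single_W add: ext_single addh_id)
lemma tw_wd: "tw q (cst v * wd l) = cst v * (cst (complex_of_real (q powi wdeg l)) * wd l)"
  by (simp add: tw_def flip: single_W add: ext_single addh_id)
lemma starq_wd: "starq q (cst v * wd l) = cst (cnj v) * starw q l"
  by (simp add: starq_ext flip: single_W add: ext_single addh_cnj)

lemma dfree_add: "dfree s q (x + y) = dfree s q x + dfree s q y" by (simp add: dfree_ext ext_add addh_id)
lemma dfree_diff: "dfree s q (x - y) = dfree s q x - dfree s q y" by (simp add: dfree_ext ext_diff addh_id)
lemma dfree_uminus: "dfree s q (- y) = - dfree s q y" by (simp add: dfree_ext ext_uminus addh_id)
lemma dfree_cst: "dfree s q (cst c * y) = cst c * dfree s q y" by (simp add: dfree_ext ext_cst addh_id)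
lemma dfree_0[simp]: "dfree s q 0 = 0" by (simp add: dfree_ext)
lemma tw_add: "tw q (x + y) = tw q x + tw q y" by (simp add: tw_def ext_add addh_id)
lemma tw_diff: "tw q (x - y) = tw q x - tw q y" by (simp add: tw_def ext_diff addh_id)
lemma tw_cst: "tw q (cst c * y) = cst c * tw q y" by (simp add: tw_def ext_cst addh_id)
lemma tw_0[simp]: "tw q 0 = 0" by (simp add: tw_def)
lemma starq_add: "starq q (x + y) = starq q x + starq q y" by (simp add: starq_ext ext_add addh_cnj)
lemma starq_diff: "starq q (x - y) = starq q x - starq q y" by (simp add: starq_ext ext_diff addh_cnj)
lemma starq_uminus: "starq q (- y) = - starq q y" by (simp add: starq_ext ext_uminus addh_cnj)
lemma starq_cst: "starq q (cst c * y) = cst (cnj c) * starq q y" by (simp add: starq_ext ext_cst addh_cnj)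
lemma starq_0[simp]: "starq q 0 = 0" by (simp add: starq_ext)

lemma prod_wd: "(cst v * wd l) * (cst v' * wd l') = cst (v * v') * wd (l @ l')"
  by (simp add: cstn wd_mult)

lemma dfree_mult:
  assumes "q \<noteq> 0"
  shows "dfree s q (x * y) = dfree s q x * tw q y + x * dfree s q y"
proof (rule fa_bilinear[where F="\<lambda>x y. dfree s q (x * y)" and G="\<lambda>x y. dfree s q x * tw q y + x * dfree s q y"])
  fix l v l' v'
  show "dfree s q (cst v * wd l * (cst v' * wd l')) = dfree s q (cst v * wd l) * tw q (cst v' * wd l') + cst v * wd l * dfree s q (cst v' * wd l')"
    unfolding prod_wd dfree_wd tw_wd dw_append[OF assms]
    by (simp add: distrib_left distrib_right cstn mult.commute mult.left_commute)
qed (simp_all add: distrib_left distrib_right dfree_add tw_add)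

lemma tw_mult:
  assumes "q \<noteq> 0"
  shows "tw q (x * y) = tw q x * tw q y"
proof (rule fa_bilinear[where F="\<lambda>x y. tw q (x * y)" and G="\<lambda>x y. tw q x * tw q y"])
  fix l v l' v'
  show "tw q (cst v * wd l * (cst v' * wd l')) = tw q (cst v * wd l) * tw q (cst v' * wd l')"
    unfolding prod_wd tw_wd
    by (simp add: powi_add_c2[OF assms] cstn mult.commute mult.left_commute flip: wd_mult)
qed (simp_all add: distrib_left distrib_right tw_add)

lemma starw_append: "starw q (l1 @ l2) = starw q l2 * starw q l1"
  by (induction l1) (simp_all add: mult.assoc)

lemma starq_mult: "starq q (x * y) = starq q y * starq q x"
proof (rule fa_bilinear[where F="\<lambda>x y. starq q (x * y)" and G="\<lambda>x y. starq q y * starq q x"])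
  fix l v l' v'
  show "starq q (cst v * wd l * (cst v' * wd l')) = starq q (cst v' * wd l') * starq q (cst v * wd l)"
    unfolding prod_wd starq_wd starw_append
    by (simp add: cstn mult.commute mult.left_commute)
qed (simp_all add: distrib_left distrib_right starq_add)

lemma relI_diff: "x \<in> relI q \<Longrightarrow> y \<in> relI q \<Longrightarrow> x - y \<in> relI q"
proof -
  assume "x \<in> relI q" "y \<in> relI q"
  then have "x + cst (-1) * y \<in> relI q" by (intro relI.add relI.lmul)
  then show ?thesis by (simp add: cst_uminus)
qed
lemma relI_uminus: "x \<in> relI q \<Longrightarrow> - x \<in> relI q"
  using relI_diff[OF relI.zero] by fastforce
lemma relI_cst: "x \<in> relI q \<Longrightarrow> cst c * x \<in> relI q" by (rule relI.lmul)
lemma relI_mult3: "x \<in> relI q \<Longrightarrow> y * x * z \<in> relI q" by (intro relI.lmul relI.rmul)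

lemma rel0: "gB * gA - Qc q * gA * gB \<in> relI q" by (rule relI.gen) (simp add: rels_def)
lemma rel1: "gC * gA - Qc q * gA * gC \<in> relI q" by (rule relI.gen) (simp add: rels_def)
lemma rel2: "gD * gB - Qc q * gB * gD \<in> relI q" by (rule relI.gen) (simp add: rels_def)
lemma rel3: "gD * gC - Qc q * gC * gD \<in> relI q" by (rule relI.gen) (simp add: rels_def)
lemma rel4: "gB * gC - gC * gB \<in> relI q" by (rule relI.gen) (simp add: rels_def)
lemma rel5: "gD * gA - gA * gD - (Qc q - cst (complex_of_real (1/q))) * gB * gC \<in> relI q" by (rule relI.gen) (simp add: rels_def)
lemma rel6: "gA * gD - cst (complex_of_real (1/q)) * gB * gC - 1 \<in> relI q" by (rule relI.gen) (simp add: rels_def)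

lemma lookup_wd: "Poly_Mapping.lookup (wd l) w = (if W l = w then 1 else 0)"
  by (simp add: wd_def lookup_single when_def)
lemma lookup_one_fa: "Poly_Mapping.lookup (1::fa) w = (if W [] = w then 1 else 0)"
  by (simp add: wd_Nil[symmetric] lookup_wd)

lemma dfree_wd1: "dfree s q (wd l) = dw s q l"
  using dfree_wd[of s q 1 l] by simp
lemma dfree_one: "dfree s q 1 = 0"
  using dfree_wd1[of s q "[]"] by (simp add: wd_Nil)

lemmas gdefs = gA_def gB_def gC_def gD_def Qc_def

lemmas nfsimps = gdefs wd_mult dfree_diff dfree_add dfree_cst dfree_wd1 dfree_one
  distrib_left distrib_right left_diff_distrib right_diff_distrib cstn

lemmas lkp = lookup_add lookup_minus lookup_cst_mult lookup_wd lookup_one_fa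


lemma tw_wd1: "tw q (wd l) = cst (complex_of_real (q powi wdeg l)) * wd l"
  using tw_wd[of q 1 l] by simp
lemma tw_one: "tw q 1 = 1"
  using tw_wd1[of q "[]"] by (simp add: wd_Nil)
lemma starq_wd1: "starq q (wd l) = starw q l"
  using starq_wd[of q 1 l] by simp
lemma starq_one: "starq q 1 = 1"
  using starq_wd1[of q "[]"] by (simp add: wd_Nil)

lemmas nfsimps2 = nfsimps tw_diff tw_add tw_cst tw_wd1 tw_one starq_diff starq_add starq_cst starq_wd1 starq_one

lemma dp0: "q \<noteq> 0 \<Longrightarrow> dfree True q (gB * gA - Qc q * gA * gB) = 0"
  apply (simp add: nfsimps2)
  apply ((rule poly_mapping_eqI)?, (simp add: lkp)?, (auto simp: field_simps power_int_minus power2_eq_square)?)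
  done
lemma dm0: "q \<noteq> 0 \<Longrightarrow> dfree False q (gB * gA - Qc q * gA * gB) = 0"
  apply (simp add: nfsimps2)
  apply ((rule poly_mapping_eqI)?, (simp add: lkp)?, (auto simp: field_simps power_int_minus power2_eq_square)?)
  done
lemma tw0: "q \<noteq> 0 \<Longrightarrow> tw q (gB * gA - Qc q * gA * gB) = cst (complex_of_real (1)) * (gB * gA - Qc q * gA * gB)"
  apply (simp add: nfsimps2)
  apply ((rule poly_mapping_eqI)?, (simp add: lkp)?, (auto simp: field_simps power_int_minus power2_eq_square)?)
  done
lemma st0: "q \<noteq> 0 \<Longrightarrow> starq q (gB * gA - Qc q * gA * gB) = cst (complex_of_real (-q)) * (gD * gC - Qc q * gC * gD)"
  apply (simp add: nfsimps2)
  apply ((rule poly_mapping_eqI)?, (simp add: lkp)?, (auto simp: field_simps power_int_minus power2_eq_square)?)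
  done
lemma dp1: "q \<noteq> 0 \<Longrightarrow> dfree True q (gC * gA - Qc q * gA * gC) = cst (complex_of_real (q)) * (gD * gA - gA * gD - (Qc q - cst (complex_of_real (1/q))) * gB * gC) - (gB * gC - gC * gB)"
  apply (simp add: nfsimps2)
  apply ((rule poly_mapping_eqI)?, (simp add: lkp)?, (auto simp: field_simps power_int_minus power2_eq_square)?)
  done
lemma dm1: "q \<noteq> 0 \<Longrightarrow> dfree False q (gC * gA - Qc q * gA * gC) = 0"
  apply (simp add: nfsimps2)
  apply ((rule poly_mapping_eqI)?, (simp add: lkp)?, (auto simp: field_simps power_int_minus power2_eq_square)?)
  done
lemma tw1: "q \<noteq> 0 \<Longrightarrow> tw q (gC * gA - Qc q * gA * gC) = cst (complex_of_real (q^2)) * (gC * gA - Qc q * gA * gC)"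
  apply (simp add: nfsimps2)
  apply ((rule poly_mapping_eqI)?, (simp add: lkp)?, (auto simp: field_simps power_int_minus power2_eq_square)?)
  done
lemma st1: "q \<noteq> 0 \<Longrightarrow> starq q (gC * gA - Qc q * gA * gC) = cst (complex_of_real (-1/q)) * (gD * gB - Qc q * gB * gD)"
  apply (simp add: nfsimps2)
  apply ((rule poly_mapping_eqI)?, (simp add: lkp)?, (auto simp: field_simps power_int_minus power2_eq_square)?)
  done
lemma dp2: "q \<noteq> 0 \<Longrightarrow> dfree True q (gD * gB - Qc q * gB * gD) = 0"
  apply (simp add: nfsimps2)
  apply ((rule poly_mapping_eqI)?, (simp add: lkp)?, (auto simp: field_simps power_int_minus power2_eq_square)?)
  done
lemma dm2: "q \<noteq> 0 \<Longrightarrow> dfree False q (gD * gB - Qc q * gB * gD) = cst (complex_of_real (q)) * (gD * gA - gA * gD - (Qc q - cst (complex_of_real (1/q))) * gB * gC) - (gB * gC - gC * gB)"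
  apply (simp add: nfsimps2)
  apply ((rule poly_mapping_eqI)?, (simp add: lkp)?, (auto simp: field_simps power_int_minus power2_eq_square)?)
  done
lemma tw2: "q \<noteq> 0 \<Longrightarrow> tw q (gD * gB - Qc q * gB * gD) = cst (complex_of_real (1/q^2)) * (gD * gB - Qc q * gB * gD)"
  apply (simp add: nfsimps2)
  apply ((rule poly_mapping_eqI)?, (simp add: lkp)?, (auto simp: field_simps power_int_minus power2_eq_square)?)
  done
lemma st2: "q \<noteq> 0 \<Longrightarrow> starq q (gD * gB - Qc q * gB * gD) = cst (complex_of_real (-q)) * (gC * gA - Qc q * gA * gC)"
  apply (simp add: nfsimps2)
  apply ((rule poly_mapping_eqI)?, (simp add: lkp)?, (auto simp: field_simps power_int_minus power2_eq_square)?)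
  done
lemma dp3: "q \<noteq> 0 \<Longrightarrow> dfree True q (gD * gC - Qc q * gC * gD) = 0"
  apply (simp add: nfsimps2)
  apply ((rule poly_mapping_eqI)?, (simp add: lkp)?, (auto simp: field_simps power_int_minus power2_eq_square)?)
  done
lemma dm3: "q \<noteq> 0 \<Longrightarrow> dfree False q (gD * gC - Qc q * gC * gD) = 0"
  apply (simp add: nfsimps2)
  apply ((rule poly_mapping_eqI)?, (simp add: lkp)?, (auto simp: field_simps power_int_minus power2_eq_square)?)
  done
lemma tw3: "q \<noteq> 0 \<Longrightarrow> tw q (gD * gC - Qc q * gC * gD) = cst (complex_of_real (1)) * (gD * gC - Qc q * gC * gD)"
  apply (simp add: nfsimps2)
  apply ((rule poly_mapping_eqI)?, (simp add: lkp)?, (auto simp: field_simps power_int_minus power2_eq_square)?)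
  done
lemma st3: "q \<noteq> 0 \<Longrightarrow> starq q (gD * gC - Qc q * gC * gD) = cst (complex_of_real (-1/q)) * (gB * gA - Qc q * gA * gB)"
  apply (simp add: nfsimps2)
  apply ((rule poly_mapping_eqI)?, (simp add: lkp)?, (auto simp: field_simps power_int_minus power2_eq_square)?)
  done
lemma dp4: "q \<noteq> 0 \<Longrightarrow> dfree True q (gB * gC - gC * gB) = cst (complex_of_real (-1/q)) * (gD * gB - Qc q * gB * gD)"
  apply (simp add: nfsimps2)
  apply ((rule poly_mapping_eqI)?, (simp add: lkp)?, (auto simp: field_simps power_int_minus power2_eq_square)?)
  done
lemma dm4: "q \<noteq> 0 \<Longrightarrow> dfree False q (gB * gC - gC * gB) = cst (complex_of_real (-q)) * (gC * gA - Qc q * gA * gC)"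
  apply (simp add: nfsimps2)
  apply ((rule poly_mapping_eqI)?, (simp add: lkp)?, (auto simp: field_simps power_int_minus power2_eq_square)?)
  done
lemma tw4: "q \<noteq> 0 \<Longrightarrow> tw q (gB * gC - gC * gB) = cst (complex_of_real (1)) * (gB * gC - gC * gB)"
  apply (simp add: nfsimps2)
  apply ((rule poly_mapping_eqI)?, (simp add: lkp)?, (auto simp: field_simps power_int_minus power2_eq_square)?)
  done
lemma st4: "q \<noteq> 0 \<Longrightarrow> starq q (gB * gC - gC * gB) = gB * gC - gC * gB"
  apply (simp add: nfsimps2)
  apply ((rule poly_mapping_eqI)?, (simp add: lkp)?, (auto simp: field_simps power_int_minus power2_eq_square)?)
  done
lemma dp5: "q \<noteq> 0 \<Longrightarrow> dfree True q (gD * gA - gA * gD - (Qc q - cst (complex_of_real (1/q))) * gB * gC) = gD * gB - Qc q * gB * gD"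
  apply (simp add: nfsimps2)
  apply ((rule poly_mapping_eqI)?, (simp add: lkp)?, (auto simp: field_simps power_int_minus power2_eq_square)?)
  done
lemma dm5: "q \<noteq> 0 \<Longrightarrow> dfree False q (gD * gA - gA * gD - (Qc q - cst (complex_of_real (1/q))) * gB * gC) = cst (complex_of_real (q^2)) * (gC * gA - Qc q * gA * gC)"
  apply (simp add: nfsimps2)
  apply ((rule poly_mapping_eqI)?, (simp add: lkp)?, (auto simp: field_simps power_int_minus power2_eq_square)?)
  done
lemma tw5: "q \<noteq> 0 \<Longrightarrow> tw q (gD * gA - gA * gD - (Qc q - cst (complex_of_real (1/q))) * gB * gC) = cst (complex_of_real (1)) * (gD * gA - gA * gD - (Qc q - cst (complex_of_real (1/q))) * gB * gC)"
  apply (simp add: nfsimps2)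
  apply ((rule poly_mapping_eqI)?, (simp add: lkp)?, (auto simp: field_simps power_int_minus power2_eq_square)?)
  done
lemma st5: "q \<noteq> 0 \<Longrightarrow> starq q (gD * gA - gA * gD - (Qc q - cst (complex_of_real (1/q))) * gB * gC) = gD * gA - gA * gD - (Qc q - cst (complex_of_real (1/q))) * gB * gC"
  apply (simp add: nfsimps2)
  apply ((rule poly_mapping_eqI)?, (simp add: lkp)?, (auto simp: field_simps power_int_minus power2_eq_square)?)
  done
lemma dp6: "q \<noteq> 0 \<Longrightarrow> dfree True q (gA * gD - cst (complex_of_real (1/q)) * gB * gC - 1) = 0"
  apply (simp add: nfsimps2)
  apply ((rule poly_mapping_eqI)?, (simp add: lkp)?, (auto simp: field_simps power_int_minus power2_eq_square)?)
  done
lemma dm6: "q \<noteq> 0 \<Longrightarrow> dfree False q (gA * gD - cst (complex_of_real (1/q)) * gB * gC - 1) = 0"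
  apply (simp add: nfsimps2)
  apply ((rule poly_mapping_eqI)?, (simp add: lkp)?, (auto simp: field_simps power_int_minus power2_eq_square)?)
  done
lemma tw6: "q \<noteq> 0 \<Longrightarrow> tw q (gA * gD - cst (complex_of_real (1/q)) * gB * gC - 1) = cst (complex_of_real (1)) * (gA * gD - cst (complex_of_real (1/q)) * gB * gC - 1)"
  apply (simp add: nfsimps2)
  apply ((rule poly_mapping_eqI)?, (simp add: lkp)?, (auto simp: field_simps power_int_minus power2_eq_square)?)
  done
lemma st6: "q \<noteq> 0 \<Longrightarrow> starq q (gA * gD - cst (complex_of_real (1/q)) * gB * gC - 1) = gA * gD - cst (complex_of_real (1/q)) * gB * gC - 1"
  apply (simp add: nfsimps2)
  apply ((rule poly_mapping_eqI)?, (simp add: lkp)?, (auto simp: field_simps power_int_minus power2_eq_square)?)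
  done

lemma zero_relI: "0 \<in> relI q" by (rule relI.zero)

lemma twr0: "q \<noteq> 0 \<Longrightarrow> tw q (gB * gA - Qc q * gA * gB) \<in> relI q"
  by (unfold tw0) (intro rel0 rel1 rel2 rel3 rel4 rel5 rel6 relI_cst relI_diff zero_relI)
lemma str0: "q \<noteq> 0 \<Longrightarrow> starq q (gB * gA - Qc q * gA * gB) \<in> relI q"
  by (unfold st0) (intro rel0 rel1 rel2 rel3 rel4 rel5 rel6 relI_cst relI_diff zero_relI)
lemma dr0: "q \<noteq> 0 \<Longrightarrow> dfree s q (gB * gA - Qc q * gA * gB) \<in> relI q"
  apply (induct s)
   apply (unfold dp0, intro rel0 rel1 rel2 rel3 rel4 rel5 rel6 relI_cst relI_diff zero_relI)
  apply (unfold dm0, intro rel0 rel1 rel2 rel3 rel4 rel5 rel6 relI_cst relI_diff zero_relI)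
  done
lemma twr1: "q \<noteq> 0 \<Longrightarrow> tw q (gC * gA - Qc q * gA * gC) \<in> relI q"
  by (unfold tw1) (intro rel0 rel1 rel2 rel3 rel4 rel5 rel6 relI_cst relI_diff zero_relI)
lemma str1: "q \<noteq> 0 \<Longrightarrow> starq q (gC * gA - Qc q * gA * gC) \<in> relI q"
  by (unfold st1) (intro rel0 rel1 rel2 rel3 rel4 rel5 rel6 relI_cst relI_diff zero_relI)
lemma dr1: "q \<noteq> 0 \<Longrightarrow> dfree s q (gC * gA - Qc q * gA * gC) \<in> relI q"
  apply (induct s)
   apply (unfold dp1, intro rel0 rel1 rel2 rel3 rel4 rel5 rel6 relI_cst relI_diff zero_relI)
  apply (unfold dm1, intro rel0 rel1 rel2 rel3 rel4 rel5 rel6 relI_cst relI_diff zero_relI)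
  done
lemma twr2: "q \<noteq> 0 \<Longrightarrow> tw q (gD * gB - Qc q * gB * gD) \<in> relI q"
  by (unfold tw2) (intro rel0 rel1 rel2 rel3 rel4 rel5 rel6 relI_cst relI_diff zero_relI)
lemma str2: "q \<noteq> 0 \<Longrightarrow> starq q (gD * gB - Qc q * gB * gD) \<in> relI q"
  by (unfold st2) (intro rel0 rel1 rel2 rel3 rel4 rel5 rel6 relI_cst relI_diff zero_relI)
lemma dr2: "q \<noteq> 0 \<Longrightarrow> dfree s q (gD * gB - Qc q * gB * gD) \<in> relI q"
  apply (induct s)
   apply (unfold dp2, intro rel0 rel1 rel2 rel3 rel4 rel5 rel6 relI_cst relI_diff zero_relI)
  apply (unfold dm2, intro rel0 rel1 rel2 rel3 rel4 rel5 rel6 relI_cst relI_diff zero_relI)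
  done
lemma twr3: "q \<noteq> 0 \<Longrightarrow> tw q (gD * gC - Qc q * gC * gD) \<in> relI q"
  by (unfold tw3) (intro rel0 rel1 rel2 rel3 rel4 rel5 rel6 relI_cst relI_diff zero_relI)
lemma str3: "q \<noteq> 0 \<Longrightarrow> starq q (gD * gC - Qc q * gC * gD) \<in> relI q"
  by (unfold st3) (intro rel0 rel1 rel2 rel3 rel4 rel5 rel6 relI_cst relI_diff zero_relI)
lemma dr3: "q \<noteq> 0 \<Longrightarrow> dfree s q (gD * gC - Qc q * gC * gD) \<in> relI q"
  apply (induct s)
   apply (unfold dp3, intro rel0 rel1 rel2 rel3 rel4 rel5 rel6 relI_cst relI_diff zero_relI)
  apply (unfold dm3, intro rel0 rel1 rel2 rel3 rel4 rel5 rel6 relI_cst relI_diff zero_relI)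
  done
lemma twr4: "q \<noteq> 0 \<Longrightarrow> tw q (gB * gC - gC * gB) \<in> relI q"
  by (unfold tw4) (intro rel0 rel1 rel2 rel3 rel4 rel5 rel6 relI_cst relI_diff zero_relI)
lemma str4: "q \<noteq> 0 \<Longrightarrow> starq q (gB * gC - gC * gB) \<in> relI q"
  by (unfold st4) (intro rel0 rel1 rel2 rel3 rel4 rel5 rel6 relI_cst relI_diff zero_relI)
lemma dr4: "q \<noteq> 0 \<Longrightarrow> dfree s q (gB * gC - gC * gB) \<in> relI q"
  apply (induct s)
   apply (unfold dp4, intro rel0 rel1 rel2 rel3 rel4 rel5 rel6 relI_cst relI_diff zero_relI)
  apply (unfold dm4, intro rel0 rel1 rel2 rel3 rel4 rel5 rel6 relI_cst relI_diff zero_relI)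
  done
lemma twr5: "q \<noteq> 0 \<Longrightarrow> tw q (gD * gA - gA * gD - (Qc q - cst (complex_of_real (1/q))) * gB * gC) \<in> relI q"
  by (unfold tw5) (intro rel0 rel1 rel2 rel3 rel4 rel5 rel6 relI_cst relI_diff zero_relI)
lemma str5: "q \<noteq> 0 \<Longrightarrow> starq q (gD * gA - gA * gD - (Qc q - cst (complex_of_real (1/q))) * gB * gC) \<in> relI q"
  by (unfold st5) (intro rel0 rel1 rel2 rel3 rel4 rel5 rel6 relI_cst relI_diff zero_relI)
lemma dr5: "q \<noteq> 0 \<Longrightarrow> dfree s q (gD * gA - gA * gD - (Qc q - cst (complex_of_real (1/q))) * gB * gC) \<in> relI q"
  apply (induct s)
   apply (unfold dp5, intro rel0 rel1 rel2 rel3 rel4 rel5 rel6 relI_cst relI_diff zero_relI)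
  apply (unfold dm5, intro rel0 rel1 rel2 rel3 rel4 rel5 rel6 relI_cst relI_diff zero_relI)
  done
lemma twr6: "q \<noteq> 0 \<Longrightarrow> tw q (gA * gD - cst (complex_of_real (1/q)) * gB * gC - 1) \<in> relI q"
  by (unfold tw6) (intro rel0 rel1 rel2 rel3 rel4 rel5 rel6 relI_cst relI_diff zero_relI)
lemma str6: "q \<noteq> 0 \<Longrightarrow> starq q (gA * gD - cst (complex_of_real (1/q)) * gB * gC - 1) \<in> relI q"
  by (unfold st6) (intro rel0 rel1 rel2 rel3 rel4 rel5 rel6 relI_cst relI_diff zero_relI)
lemma dr6: "q \<noteq> 0 \<Longrightarrow> dfree s q (gA * gD - cst (complex_of_real (1/q)) * gB * gC - 1) \<in> relI q"
  apply (induct s)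
   apply (unfold dp6, intro rel0 rel1 rel2 rel3 rel4 rel5 rel6 relI_cst relI_diff zero_relI)
  apply (unfold dm6, intro rel0 rel1 rel2 rel3 rel4 rel5 rel6 relI_cst relI_diff zero_relI)
  done

lemma tw_relI:
  assumes q: "q \<noteq> 0"
  shows "x \<in> relI q \<Longrightarrow> tw q x \<in> relI q"
proof (induction rule: relI.induct)
  case (gen r)
  then show ?case unfolding rels_def
    using twr0[OF q] twr1[OF q] twr2[OF q] twr3[OF q] twr4[OF q] twr5[OF q] twr6[OF q] by blast
next
  case zero then show ?case by (simp add: relI.zero)
next
  case (add x y) then show ?case by (simp add: tw_add relI.add)
next
  case (lmul x y) then show ?case by (simp add: tw_mult[OF q] relI.lmul)
next
  case (rmul x y) then show ?case by (simp add: tw_mult[OF q] relI.rmul)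
qed

lemma dfree_relI:
  assumes q: "q \<noteq> 0"
  shows "x \<in> relI q \<Longrightarrow> dfree s q x \<in> relI q"
proof (induction rule: relI.induct)
  case (gen r)
  then show ?case unfolding rels_def
    using dr0[OF q] dr1[OF q] dr2[OF q] dr3[OF q] dr4[OF q] dr5[OF q] dr6[OF q] by blast
next
  case zero then show ?case by (simp add: relI.zero)
next
  case (add x y) then show ?case by (simp add: dfree_add relI.add)
next
  case (lmul x y) then show ?case by (simp add: dfree_mult[OF q] relI.lmul relI.add tw_relI[OF q])
next
  case (rmul x y) then show ?case by (simp add: dfree_mult[OF q] relI.lmul relI.rmul relI.add)
qed

lemma starq_relI:
  assumes q: "q \<noteq> 0"
  shows "x \<in> relI q \<Longrightarrow> starq q x \<in> relI q"
proof (induction rule: relI.induct)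
  case (gen r)
  then show ?case unfolding rels_def
    using str0[OF q] str1[OF q] str2[OF q] str3[OF q] str4[OF q] str5[OF q] str6[OF q] by blast
next
  case zero then show ?case by (simp add: relI.zero)
next
  case (add x y) then show ?case by (simp add: starq_add relI.add)
next
  case (lmul x y) then show ?case by (simp add: starq_mult relI.rmul)
next
  case (rmul x y) then show ?case by (simp add: starq_mult relI.lmul)
qed

lemma eqq_refl[simp]: "eqq q x x" by (simp add: eqq_def relI.zero)
lemma eqq_sym: "eqq q x y \<Longrightarrow> eqq q y x"
  unfolding eqq_def using relI_uminus by fastforce
lemma eqq_trans: "eqq q x y \<Longrightarrow> eqq q y z \<Longrightarrow> eqq q x z"
  unfolding eqq_def using relI.add by fastforce
lemma eqq_add: "eqq q x x' \<Longrightarrow> eqq q y y' \<Longrightarrow> eqq q (x + y) (x' + y')"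
  unfolding eqq_def using relI.add by (fastforce simp: algebra_simps)
lemma eqq_diff: "eqq q x x' \<Longrightarrow> eqq q y y' \<Longrightarrow> eqq q (x - y) (x' - y')"
  unfolding eqq_def using relI_diff by (fastforce simp: algebra_simps)
lemma eqq_uminus: "eqq q x x' \<Longrightarrow> eqq q (- x) (- x')"
  unfolding eqq_def using relI_uminus by (fastforce simp: algebra_simps)
lemma eqq_mult: "eqq q x x' \<Longrightarrow> eqq q y y' \<Longrightarrow> eqq q (x * y) (x' * y')"
proof -
  assume "eqq q x x'" "eqq q y y'"
  then have "(x - x') * y + x' * (y - y') \<in> relI q"
    unfolding eqq_def by (intro relI.add relI.lmul relI.rmul)
  then show ?thesis unfolding eqq_def by (simp add: algebra_simps)
qed
lemma eqq_cst: "eqq q y y' \<Longrightarrow> eqq q (cst c * y) (cst c * y')"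
  by (rule eqq_mult) simp_all
lemma eqq_dfree: "q \<noteq> 0 \<Longrightarrow> eqq q x y \<Longrightarrow> eqq q (dfree s q x) (dfree s q y)"
  unfolding eqq_def by (metis dfree_diff dfree_relI)
lemma eqq_starq: "q \<noteq> 0 \<Longrightarrow> eqq q x y \<Longrightarrow> eqq q (starq q x) (starq q y)"
  unfolding eqq_def by (metis starq_diff starq_relI)
lemma eqq_tw: "q \<noteq> 0 \<Longrightarrow> eqq q x y \<Longrightarrow> eqq q (tw q x) (tw q y)"
  unfolding eqq_def by (metis tw_diff tw_relI)
lemma eqq_relI: "x - y \<in> relI q \<Longrightarrow> eqq q x y" by (simp add: eqq_def)
lemma eqq_eq: "x = y \<Longrightarrow> eqq q x y" by simp

lemma K_rel: "eqq q (gA * gD - cst (complex_of_real (1/q)) * gC * gB) 1"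
proof -
  have "(gA * gD - cst (complex_of_real (1/q)) * gB * gC - 1) + cst (complex_of_real (1/q)) * (gB * gC - gC * gB) \<in> relI q"
    by (intro relI.add rel6 relI.lmul rel4)
  then show ?thesis unfolding eqq_def by (simp add: algebra_simps mult.assoc)
qed

definition Hn :: "int \<Rightarrow> fa \<Rightarrow> bool" where
  "Hn n p \<longleftrightarrow> (\<forall>w\<in>Poly_Mapping.keys p. wdeg (unW w) = n)"

lemma Hn_0[simp]: "Hn n 0" by (simp add: Hn_def)
lemma Hn_add: "Hn n x \<Longrightarrow> Hn n y \<Longrightarrow> Hn n (x + y)"
  unfolding Hn_def using keys_add[of x y] by blast
lemma keys_uminus_fa: "Poly_Mapping.keys (- (x::fa)) = Poly_Mapping.keys x"
  by (auto simp: in_keys_iff)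
lemma Hn_uminus: "Hn n x \<Longrightarrow> Hn n (- x)"
  unfolding Hn_def by (simp add: keys_uminus_fa)
lemma Hn_diff: "Hn n x \<Longrightarrow> Hn n y \<Longrightarrow> Hn n (x - y)"
  using Hn_add[OF _ Hn_uminus, of n x y] by simp
lemma Hn_cst: "Hn n x \<Longrightarrow> Hn n (cst c * x)"
  unfolding Hn_def using keys_cst_mult[of c x] by blast
lemma wdeg_plus: "wdeg (unW (a + b)) = wdeg (unW a) + wdeg (unW b)"
  by (cases a; cases b) simp
lemma Hn_mult: "Hn n x \<Longrightarrow> Hn m y \<Longrightarrow> Hn (n + m) (x * y)"
  unfolding Hn_def using keys_mult[of x y] by (fastforce simp: wdeg_plus)
lemma Hn_wd: "Hn (wdeg l) (wd l)" by (simp add: Hn_def wd_def)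
lemma Hn_wd': "n = wdeg l \<Longrightarrow> Hn n (wd l)" by (simp add: Hn_wd)
lemma Hn_one: "Hn 0 1" using Hn_wd[of "[]"] by (simp add: wd_Nil)

lemma keys_single_add: "k \<notin> Poly_Mapping.keys p \<Longrightarrow> v \<noteq> 0 \<Longrightarrow>
   Poly_Mapping.keys (Poly_Mapping.single k v + p) = insert k (Poly_Mapping.keys p)"
  by (auto simp: in_keys_iff lookup_add lookup_single when_def split: if_splits)

lemma Hn_single_add: "k \<notin> Poly_Mapping.keys p \<Longrightarrow> v \<noteq> 0 \<Longrightarrow> Hn n (Poly_Mapping.single k v + p) \<Longrightarrow>
   Hn n p \<and> wdeg (unW k) = n"
  unfolding Hn_def by (simp add: keys_single_add)

lemma Hn_ext:
  assumes "addh \<sigma>" "\<And>l. Hn (wdeg l + k) (f l)"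
  shows "Hn n p \<Longrightarrow> Hn (n + k) (ext \<sigma> f p)"
proof (induction p rule: fa_induct)
  case zero then show ?case by simp
next
  case (step k' v p)
  then have "Hn n p" "wdeg (unW k') = n" using Hn_single_add by blast+
  then show ?case using step assms
    by (simp add: ext_single_add) (metis Hn_add Hn_cst)
qed

lemma Hn_dg: "Hn (gdeg g - 2) (dg True q g)" "Hn (gdeg g + 2) (dg False q g)"
  by (cases g; simp add: gdefs Hn_wd' Hn_cst wdeg_def)+

lemma Hn_dw: "Hn (wdeg l - 2) (dw True q l)" "Hn (wdeg l + 2) (dw False q l)"
proof (induction l)
  case Nil show "Hn (wdeg [] - 2) (dw True q [])" "Hn (wdeg [] + 2) (dw False q [])" by simp_all
next
  case (Cons g l)
  have a: "Hn (gdeg g - 2 + wdeg l) (dg True q g * wd l)" "Hn (gdeg g + 2 + wdeg l) (dg False q g * wd l)"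
    by (intro Hn_mult Hn_dg Hn_wd)+
  have b: "Hn (gdeg g + (wdeg l - 2)) (wd [g] * dw True q l)" "Hn (gdeg g + (wdeg l + 2)) (wd [g] * dw False q l)"
    by (intro Hn_mult Cons Hn_wd'; simp add: wdeg_def)+
  show "Hn (wdeg (g # l) - 2) (dw True q (g # l))" "Hn (wdeg (g # l) + 2) (dw False q (g # l))"
    using a b by (auto intro!: Hn_add Hn_cst simp: mult.assoc algebra_simps)
qed

lemma Hn_dfree: "Hn n p \<Longrightarrow> Hn (n - 2) (dfree True q p)" "Hn n p \<Longrightarrow> Hn (n + 2) (dfree False q p)"
  unfolding dfree_ext
  using Hn_ext[OF addh_id, of "-2" "dw True q" n p] Hn_ext[OF addh_id, of "2" "dw False q" n p] Hn_dw
  by simp_all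

lemma Hn_starg: "Hn (- gdeg g) (starg q g)"
  by (cases g; simp add: gdefs Hn_wd' Hn_cst Hn_uminus wdeg_def)

lemma Hn_starw: "Hn (- wdeg l) (starw q l)"
proof (induction l)
  case Nil then show ?case by (simp add: Hn_one)
next
  case (Cons g l)
  then show ?case using Hn_mult[OF Cons Hn_starg[of g q]] by (simp add: algebra_simps)
qed

lemma Hn_starq: "Hn n p \<Longrightarrow> Hn (- n) (starq q p)"
proof (induction p rule: fa_induct)
  case zero then show ?case by simp
next
  case (step k v p)
  then have h: "Hn n p" "wdeg (unW k) = n" using Hn_single_add by blast+
  obtain l where k: "k = W l" by (cases k)
  have "Hn (- n) (starq q (cst v * wd l))" using h k Hn_starw[of l q] by (simp add: starq_wd Hn_cst)
  then show ?case using step h by (simp add: starq_add k single_W Hn_add)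
qed

lemma Hn_tw: "Hn n p \<Longrightarrow> tw q p = cst (complex_of_real (q powi n)) * p"
proof (induction p rule: fa_induct)
  case zero then show ?case by simp
next
  case (step k v p)
  then have h: "Hn n p" "wdeg (unW k) = n" using Hn_single_add by blast+
  obtain l where k: "k = W l" by (cases k)
  show ?case using step h by (simp add: tw_add k single_W tw_wd distrib_left cstn mult.commute)
qed

lemma homq_iff: "homq q n x \<longleftrightarrow> (\<exists>p. eqq q x p \<and> Hn n p)" by (simp add: homq_def Hn_def)

lemma homq_Hn: "Hn n p \<Longrightarrow> homq q n p" unfolding homq_iff using eqq_refl by blast
lemma homq_eqq: "eqq q x y \<Longrightarrow> homq q n y \<Longrightarrow> homq q n x"
  unfolding homq_iff by (meson eqq_trans)
lemma homq_0[simp]: "homq q n 0" by (rule homq_Hn) simp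
lemma homq_add: "homq q n x \<Longrightarrow> homq q n y \<Longrightarrow> homq q n (x + y)"
  unfolding homq_iff by (meson eqq_add Hn_add)
lemma homq_diff: "homq q n x \<Longrightarrow> homq q n y \<Longrightarrow> homq q n (x - y)"
  unfolding homq_iff by (meson eqq_diff Hn_diff)
lemma homq_uminus: "homq q n x \<Longrightarrow> homq q n (- x)"
  unfolding homq_iff by (meson eqq_uminus Hn_uminus)
lemma homq_cst: "homq q n x \<Longrightarrow> homq q n (cst c * x)"
  unfolding homq_iff by (meson eqq_cst Hn_cst)
lemma homq_mult: "homq q n x \<Longrightarrow> homq q m y \<Longrightarrow> homq q (n + m) (x * y)"
  unfolding homq_iff by (meson eqq_mult Hn_mult)
lemma homq_mult': "homq q n x \<Longrightarrow> homq q m y \<Longrightarrow> k = n + m \<Longrightarrow> homq q k (x * y)"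
  using homq_mult by blast
lemma homq_dfreeT: "q \<noteq> 0 \<Longrightarrow> homq q n x \<Longrightarrow> homq q (n - 2) (dfree True q x)"
  unfolding homq_iff by (meson eqq_dfree Hn_dfree)
lemma homq_dfreeF: "q \<noteq> 0 \<Longrightarrow> homq q n x \<Longrightarrow> homq q (n + 2) (dfree False q x)"
  unfolding homq_iff by (meson eqq_dfree Hn_dfree)
lemma homq_starq: "q \<noteq> 0 \<Longrightarrow> homq q n x \<Longrightarrow> homq q (- n) (starq q x)"
  unfolding homq_iff by (meson eqq_starq Hn_starq)
lemma homq_gA: "homq q 1 gA" by (rule homq_Hn) (simp add: gA_def Hn_wd' wdeg_def)
lemma homq_gB: "homq q (-1) gB" by (rule homq_Hn) (simp add: gB_def Hn_wd' wdeg_def)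
lemma homq_gC: "homq q 1 gC" by (rule homq_Hn) (simp add: gC_def Hn_wd' wdeg_def)
lemma homq_gD: "homq q (-1) gD" by (rule homq_Hn) (simp add: gD_def Hn_wd' wdeg_def)
lemma homq_one: "homq q 0 1" by (rule homq_Hn) (simp add: Hn_one)

lemma tw_homq: "q \<noteq> 0 \<Longrightarrow> homq q n y \<Longrightarrow> eqq q (tw q y) (cst (complex_of_real (q powi n)) * y)"
  unfolding homq_iff by (metis Hn_tw eqq_tw eqq_cst eqq_sym eqq_trans)

lemma dfree_mult_hom: "q \<noteq> 0 \<Longrightarrow> homq q n y \<Longrightarrow>
   eqq q (dfree s q (x * y)) (cst (complex_of_real (q powi n)) * (dfree s q x * y) + x * dfree s q y)"
  unfolding dfree_mult
  by (rule eqq_add[OF _ eqq_refl]) (metis tw_homq eqq_mult eqq_refl cst_comm2)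

lemma cnj_powi: "cnj ((complex_of_real q) powi n) = (complex_of_real q) powi n"
  by (cases "n \<ge> 0") (simp_all add: power_int_def)

definition ee :: "bool \<Rightarrow> int" where "ee s = (if s then -1 else 1)"

lemma dstar_gen:
  assumes "q \<noteq> 0"
  shows "dfree True q (starg q g) = cst (- ((complex_of_real q) powi (-1 - gdeg g))) * starq q (dg False q g)"
  "dfree False q (starg q g) = cst (- ((complex_of_real q) powi (1 - gdeg g))) * starq q (dg True q g)"
  using assms by (cases g; simp add: gdefs dfree_wd1 starq_wd1 dfree_cst starq_cst dfree_uminus cstn wd_Nil cst_uminus)+

lemma dstar_gen':
  assumes "q \<noteq> 0"
  shows "dfree s q (starg q g) = cst (- ((complex_of_real q) powi (ee s - gdeg g))) * starq q (dg (\<not> s) q g)"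
  using dstar_gen[OF assms] by (cases s) (simp_all add: ee_def)

lemma starq_cst1: "starq q (cst c) = cst (cnj c)"
  using starq_cst[of q c 1] by (simp add: starq_one)

lemma dstar_w:
  assumes q: "q \<noteq> 0"
  shows "dfree s q (starw q l) = cst (- ((complex_of_real q) powi (ee s - wdeg l))) * starq q (dw (\<not> s) q l)"
proof (induction l)
  case Nil then show ?case by (simp add: dfree_one)
next
  case (Cons g l)
  let ?c = "complex_of_real q"
  have twg: "tw q (starg q g) = cst (?c powi (- gdeg g)) * starg q g"
    using Hn_tw[OF Hn_starg[of g q], of q] by simp
  have L: "dfree s q (starw q (g#l)) = cst (-(?c powi (ee s - wdeg l) * ?c powi (- gdeg g))) * (starq q (dw (\<not>s) q l) * starg q g)
      + cst (-(?c powi (ee s - gdeg g))) * (starw q l * starq q (dg (\<not>s) q g))"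
    by (simp add: dfree_mult[OF q] Cons twg dstar_gen'[OF q] cstn cst_uminus mult.commute mult.left_commute)
  have R: "cst (-(?c powi (ee s - wdeg (g#l)))) * starq q (dw (\<not> s) q (g#l)) =
      cst (-(?c powi (ee s - wdeg (g#l)))) * (starq q (dw (\<not>s) q l) * starg q g)
      + cst (-(?c powi (ee s - wdeg (g#l)) * ?c powi (wdeg l))) * (starw q l * starq q (dg (\<not>s) q g))"
    by (simp add: starq_add starq_mult starq_cst starq_cst1 starq_wd1 cnj_powi distrib_left cstn cst_uminus mult.commute mult.left_commute)
  have c0: "?c \<noteq> 0" using q by simp
  have c1: "?c powi (ee s - wdeg l) * ?c powi (- gdeg g) = ?c powi (ee s - wdeg (g#l))"
    using power_int_add[of ?c "ee s - wdeg l" "- gdeg g"] c0 by (simp add: algebra_simps)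
  have c2: "?c powi (ee s - wdeg (g#l)) * ?c powi (wdeg l) = ?c powi (ee s - gdeg g)"
    using power_int_add[of ?c "ee s - wdeg (g#l)" "wdeg l"] c0 by (simp add: algebra_simps)
  show ?case unfolding L R c1 c2 ..
qed

lemma dstar_Hn:
  assumes q: "q \<noteq> 0"
  shows "Hn n p \<Longrightarrow> dfree s q (starq q p) = cst (- ((complex_of_real q) powi (ee s - n))) * starq q (dfree (\<not> s) q p)"
proof (induction p rule: fa_induct)
  case zero then show ?case by simp
next
  case (step k v p)
  then have h: "Hn n p" "wdeg (unW k) = n" using Hn_single_add by blast+
  obtain l where k: "k = W l" by (cases k)
  show ?case using step h k
    by (simp add: single_W starq_add dfree_add starq_wd dfree_cst dfree_wd starq_cst starq_wd1 dfree_wd1 dstar_w[OF q] distrib_left cstn mult.commute)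
qed

lemma dstar_homq:
  assumes q: "q \<noteq> 0" and h: "homq q n y"
  shows "eqq q (dfree s q (starq q y)) (cst (- ((complex_of_real q) powi (ee s - n))) * starq q (dfree (\<not> s) q y))"
proof -
  obtain p where p: "eqq q y p" "Hn n p" using h by (auto simp: homq_iff)
  have "eqq q (dfree s q (starq q y)) (dfree s q (starq q p))"
    by (intro eqq_dfree eqq_starq q p)
  also have "dfree s q (starq q p) = cst (- ((complex_of_real q) powi (ee s - n))) * starq q (dfree (\<not> s) q p)"
    by (rule dstar_Hn[OF q p(2)])
  finally have 1: "eqq q (dfree s q (starq q y)) (cst (- ((complex_of_real q) powi (ee s - n))) * starq q (dfree (\<not> s) q p))" .
  have 2: "eqq q (starq q (dfree (\<not> s) q p)) (starq q (dfree (\<not> s) q y))"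
    by (intro eqq_dfree eqq_starq q eqq_sym[OF p(1)])
  show ?thesis using eqq_trans[OF 1 eqq_cst[OF 2]] .
qed

lemma separation:
  assumes "x \<notin> relI q"
  obtains \<psi> :: "fa \<Rightarrow> complex" where "\<And>a b. \<psi> (a + b) = \<psi> a + \<psi> b" "\<And>c a. \<psi> (cst c * a) = c * \<psi> a"
    "\<And>r. r \<in> relI q \<Longrightarrow> \<psi> r = 0" "\<psi> x = 1"
proof -
  interpret V: vector_space "\<lambda>c (v::fa). cst c * v"
    by unfold_locales (simp_all add: distrib_left cst_add distrib_right cst_mult mult.assoc)
  interpret C: vector_space "(*) :: complex \<Rightarrow> complex \<Rightarrow> complex"
    by unfold_locales (simp_all add: algebra_simps)
  interpret P: vector_space_pair "\<lambda>c (v::fa). cst c * v" "(*) :: complex \<Rightarrow> complex \<Rightarrow> complex" ..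
  have sub: "V.subspace (relI q)" unfolding V.subspace_def using relI.zero relI.add relI_cst by blast
  obtain B where B: "B \<subseteq> relI q" "V.independent B" "relI q \<subseteq> V.span B"
    using V.maximal_independent_subset[of "relI q"] by blast
  have "V.span B \<subseteq> relI q" using V.span_minimal[OF B(1) sub] .
  then have "x \<notin> V.span B" using assms by blast
  then have ind: "V.independent (insert x B)" using V.independent_insertI B(2) by blast
  obtain g where g: "Vector_Spaces.linear (\<lambda>c (v::fa). cst c * v) (*) g" "\<forall>v\<in>insert x B. g v = (if v = x then 1 else 0)"
    using P.linear_independent_extend[OF ind, of "\<lambda>v. if v = x then 1 else 0"] by blast
  have xB: "x \<notin> B" using \<open>x \<notin> V.span B\<close> V.span_superset by blast
  have z: "g r = 0" if "r \<in> relI q" for r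
  proof -
    have "g r = (\<lambda>_. 0) r"
      by (rule P.linear_eq_on_span[OF g(1) P.linear_zero, of B]) (use g(2) xB B(3) that in auto)
    then show ?thesis by simp
  qed
  have lin: "g (a + b) = g a + g b" "g (cst c * a) = c * g a" for a b c
    using g(1) unfolding Vector_Spaces.linear_iff by auto
  show ?thesis by (rule that[of g]) (use lin z g(2) in auto)
qed

definition La :: "real \<Rightarrow> tens \<Rightarrow> form" where
  "La q T = fsum (map (\<lambda>(w, t). rmulF q 0 w (t * gA)) T)"
definition Lc :: "real \<Rightarrow> tens \<Rightarrow> form" where
  "Lc q T = fsum (map (\<lambda>(w, t). rmulF q 0 w (t * gC)) T)"

lemma fsum_Nil[simp]: "fsum [] = (0, 0)" by (simp add: fsum_def)
lemma fsum_Cons[simp]: "fsum (w # ws) = fadd w (fsum ws)" by (simp add: fsum_def)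
lemma fst_fadd[simp]: "fst (fadd w v) = fst w + fst v" by (simp add: fadd_def)
lemma snd_fadd[simp]: "snd (fadd w v) = snd w + snd v" by (simp add: fadd_def)
lemma rmulF0[simp]: "rmulF q 0 w h = (fst w * h, snd w * h)" by (simp add: rmulF_def)
lemma fst_lmulF[simp]: "fst (lmulF h w) = h * fst w" by (simp add: lmulF_def)
lemma snd_lmulF[simp]: "snd (lmulF h w) = h * snd w" by (simp add: lmulF_def)
lemma fst_rmulF[simp]: "fst (rmulF q n w h) = cst (complex_of_real (q powi n)) * fst w * h" by (simp add: rmulF_def)
lemma snd_rmulF[simp]: "snd (rmulF q n w h) = cst (complex_of_real (q powi n)) * snd w * h" by (simp add: rmulF_def)
lemma fst_fstar[simp]: "fst (fstar q w) = - (cst (complex_of_real (1/q)) * starq q (snd w))" by (simp add: fstar_def)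
lemma snd_fstar[simp]: "snd (fstar q w) = - (Qc q * starq q (fst w))" by (simp add: fstar_def)
lemma fst_proj01[simp]: "fst (proj01 w) = 0" by (simp add: proj01_def)
lemma snd_proj01[simp]: "snd (proj01 w) = snd w" by (simp add: proj01_def)

lemma La_Nil[simp]: "La q [] = (0, 0)" by (simp add: La_def)
lemma Lc_Nil[simp]: "Lc q [] = (0, 0)" by (simp add: Lc_def)
lemma La_Cons[simp]: "La q ((w, t) # T) = fadd (fst w * (t * gA), snd w * (t * gA)) (La q T)" by (simp add: La_def)
lemma Lc_Cons[simp]: "Lc q ((w, t) # T) = fadd (fst w * (t * gC), snd w * (t * gC)) (Lc q T)" by (simp add: Lc_def)
lemma La_append: "La q (T @ T') = fadd (La q T) (La q T')"
  by (induction T) (auto simp: fadd_def add.assoc)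
lemma Lc_append: "Lc q (T @ T') = fadd (Lc q T) (Lc q T')"
  by (induction T) (auto simp: fadd_def add.assoc)
lemma La_lmul: "La q (map (\<lambda>(w, t). (lmulF h w, t)) T) = lmulF h (La q T)"
  by (induction T) (auto simp: fadd_def lmulF_def distrib_left mult.assoc)
lemma Lc_lmul: "Lc q (map (\<lambda>(w, t). (lmulF h w, t)) T) = lmulF h (Lc q T)"
  by (induction T) (auto simp: fadd_def lmulF_def distrib_left mult.assoc)
lemma La_proj: "La q (map (\<lambda>(w, t). (proj01 w, t)) T) = (0, snd (La q T))"
  by (induction T) (auto simp: fadd_def)
lemma Lc_proj: "Lc q (map (\<lambda>(w, t). (proj01 w, t)) T) = (0, snd (Lc q T))"
  by (induction T) (auto simp: fadd_def)

lemma feq_iff: "feq q w v \<longleftrightarrow> eqq q (fst w) (fst v) \<and> eqq q (snd w) (snd v)" by (simp add: feq_def)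
lemma isF_iff: "isF q w \<longleftrightarrow> homq q (-2) (fst w) \<and> homq q 2 (snd w)" by (simp add: isF_def)

lemma isT_Nil[simp]: "isT q []" by (simp add: isT_def)
lemma isT_Cons[simp]: "isT q ((w, t) # T) \<longleftrightarrow> isF q w \<and> isS q t \<and> isT q T" by (simp add: isT_def)
lemma isT_append[simp]: "isT q (T @ T') \<longleftrightarrow> isT q T \<and> isT q T'" by (auto simp: isT_def)

lemma isF_zero[simp]: "isF q (0, 0)" by (simp add: isF_def)
lemma isF_fadd: "isF q w \<Longrightarrow> isF q v \<Longrightarrow> isF q (fadd w v)" by (simp add: isF_def homq_add)

lemma homq_ftu: "homq q n f \<Longrightarrow> homq q (-1) t \<Longrightarrow> homq q 1 u \<Longrightarrow> homq q n (f * (t * u))"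
  using homq_mult[of q n f 0 "t * u"] homq_mult[of q "-1" t 1 u] by simp

lemma isF_La: "isT q T \<Longrightarrow> isF q (La q T)"
proof (induction T)
  case Nil then show ?case by simp
next
  case (Cons x T)
  obtain w t where x: "x = (w, t)" by (cases x)
  have "homq q (-2) (fst w * (t * gA))" "homq q 2 (snd w * (t * gA))"
    using Cons x by (auto simp: isF_def isS_def intro!: homq_ftu homq_gA)
  then show ?case using Cons x by (auto intro!: homq_add simp: isF_def)
qed

lemma isF_Lc: "isT q T \<Longrightarrow> isF q (Lc q T)"
proof (induction T)
  case Nil then show ?case by simp
next
  case (Cons x T)
  obtain w t where x: "x = (w, t)" by (cases x)
  have "homq q (-2) (fst w * (t * gC))" "homq q 2 (snd w * (t * gC))"
    using Cons x by (auto simp: isF_def isS_def intro!: homq_ftu homq_gC)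
  then show ?case using Cons x by (auto intro!: homq_add simp: isF_def)
qed

lemma bal_eq: "balanced q \<phi> \<Longrightarrow> isF q w \<Longrightarrow> isF q w' \<Longrightarrow> isS q s \<Longrightarrow> isS q s' \<Longrightarrow> feq q w w' \<Longrightarrow> eqq q s s' \<Longrightarrow> \<phi> w s = \<phi> w' s'"
  unfolding balanced_def by blast
lemma bal_fadd: "balanced q \<phi> \<Longrightarrow> isF q w \<Longrightarrow> isF q w' \<Longrightarrow> isS q s \<Longrightarrow> \<phi> (fadd w w') s = \<phi> w s + \<phi> w' s"
  unfolding balanced_def by blast
lemma bal_sadd: "balanced q \<phi> \<Longrightarrow> isF q w \<Longrightarrow> isS q s \<Longrightarrow> isS q s' \<Longrightarrow> \<phi> w (s + s') = \<phi> w s + \<phi> w s'"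
  unfolding balanced_def by blast
lemma bal_lcst: "balanced q \<phi> \<Longrightarrow> isF q w \<Longrightarrow> isS q s \<Longrightarrow> \<phi> (lmulF (cst c) w) s = c * \<phi> w s"
  unfolding balanced_def by blast
lemma bal_scst: "balanced q \<phi> \<Longrightarrow> isF q w \<Longrightarrow> isS q s \<Longrightarrow> \<phi> w (cst c * s) = c * \<phi> w s"
  unfolding balanced_def by blast
lemma bal_rmul: "balanced q \<phi> \<Longrightarrow> isF q w \<Longrightarrow> isA q h \<Longrightarrow> isS q s \<Longrightarrow> \<phi> (rmulF q 0 w h) s = \<phi> w (h * s)"
  unfolding balanced_def by blast

lemma bal_zero: "balanced q \<phi> \<Longrightarrow> isS q s \<Longrightarrow> \<phi> (0, 0) s = 0"
  using bal_lcst[of q \<phi> "(0,0)" s 0] by (simp add: lmulF_def)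

lemma isS_gB: "isS q gB" by (simp add: isS_def homq_gB)
lemma isS_gD: "isS q gD" by (simp add: isS_def homq_gD)

lemma t_decomp: "eqq q t (t * gA * gD + cst (complex_of_real (-1/q)) * (t * gC * gB))"
proof -
  have "eqq q (t * (gA * gD - cst (complex_of_real (1/q)) * gC * gB)) (t * 1)"
    by (rule eqq_mult[OF eqq_refl K_rel])
  moreover have "t * (gA * gD - cst (complex_of_real (1/q)) * gC * gB) = t * gA * gD + cst (complex_of_real (-1/q)) * (t * gC * gB)"
    by (simp add: algebra_simps cstn cst_uminus)
  ultimately show ?thesis by (simp add: eqq_sym)
qed

lemma isF_r0: "isF q w \<Longrightarrow> homq q (-1) t \<Longrightarrow> homq q 1 u \<Longrightarrow> isF q (fst w * (t * u), snd w * (t * u))"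
  by (simp add: isF_def homq_ftu)

lemma phi_decomp:
  assumes b: "balanced q \<phi>" and w: "isF q w" and t: "isS q t"
  shows "\<phi> w t = \<phi> (fst w * (t * gA), snd w * (t * gA)) gD + complex_of_real (-1/q) * \<phi> (fst w * (t * gC), snd w * (t * gC)) gB"
proof -
  have ht: "homq q (-1) t" using t by (simp add: isS_def)
  have s1: "isS q (t * gA * gD)" unfolding isS_def
    by (rule homq_mult'[OF homq_mult'[OF ht homq_gA] homq_gD]) simp_all
  have s2: "isS q (t * gC * gB)" unfolding isS_def
    by (rule homq_mult'[OF homq_mult'[OF ht homq_gC] homq_gB]) simp_all
  have s3: "isS q (cst c * (t * gC * gB))" for c using s2 by (simp add: isS_def homq_cst)
  have s4: "isS q (t * gA * gD + cst (complex_of_real (-1/q)) * (t * gC * gB))"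
    using s1 s3 by (simp add: isS_def homq_add)
  have fw: "feq q w w" by (simp add: feq_def)
  have "\<phi> w t = \<phi> w (t * gA * gD + cst (complex_of_real (-1/q)) * (t * gC * gB))"
    by (rule bal_eq[OF b w w t s4 fw t_decomp])
  also have "\<dots> = \<phi> w (t * gA * gD) + complex_of_real (-1/q) * \<phi> w (t * gC * gB)"
    using bal_sadd[OF b w s1 s3] bal_scst[OF b w s2] by simp
  also have "\<phi> w (t * gA * gD) = \<phi> (rmulF q 0 w (t * gA)) gD"
    using bal_rmul[OF b w _ isS_gD, of "t * gA"] homq_mult'[OF ht homq_gA]
    by (simp add: isA_def mult.assoc)
  also have "\<phi> w (t * gC * gB) = \<phi> (rmulF q 0 w (t * gC)) gB"
    using bal_rmul[OF b w _ isS_gB, of "t * gC"] homq_mult'[OF ht homq_gC]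
    by (simp add: isA_def mult.assoc)
  finally show ?thesis by simp
qed

lemma phi_sum:
  assumes b: "balanced q \<phi>"
  shows "isT q T \<Longrightarrow> sum_list (map (\<lambda>(w, t). \<phi> w t) T) = \<phi> (La q T) gD + complex_of_real (-1/q) * \<phi> (Lc q T) gB"
proof (induction T)
  case Nil then show ?case using bal_zero[OF b isS_gD] bal_zero[OF b isS_gB] by simp
next
  case (Cons x T)
  obtain w t where x: "x = (w, t)" by (cases x)
  have w: "isF q w" and t: "isS q t" and T: "isT q T" using Cons x by auto
  have ht: "homq q (-1) t" using t by (simp add: isS_def)
  have fa: "isF q (fst w * (t * gA), snd w * (t * gA))" by (rule isF_r0[OF w ht homq_gA])
  have fc: "isF q (fst w * (t * gC), snd w * (t * gC))" by (rule isF_r0[OF w ht homq_gC])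
  have "sum_list (map (\<lambda>(w, t). \<phi> w t) (x # T)) = \<phi> w t + sum_list (map (\<lambda>(w, t). \<phi> w t) T)" by (simp add: x)
  also have "\<dots> = \<phi> (La q (x # T)) gD + complex_of_real (-1/q) * \<phi> (Lc q (x # T)) gB"
    unfolding phi_decomp[OF b w t] Cons.IH[OF T] x La_Cons Lc_Cons
    using bal_fadd[OF b fa isF_La[OF T] isS_gD] bal_fadd[OF b fc isF_Lc[OF T] isS_gB]
    by (simp add: algebra_simps)
  finally show ?case .
qed

lemma teq_intro:
  assumes "isT q T" "isT q T'" "feq q (La q T) (La q T')" "feq q (Lc q T) (Lc q T')"
  shows "teq q T T'"
  unfolding teq_def
proof (intro conjI allI impI assms(1,2))
  fix \<phi> assume b: "balanced q \<phi>"
  show "sum_list (map (\<lambda>(w, t). \<phi> w t) T) = sum_list (map (\<lambda>(w, t). \<phi> w t) T')"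
    unfolding phi_sum[OF b assms(1)] phi_sum[OF b assms(2)]
    using bal_eq[OF b isF_La[OF assms(1)] isF_La[OF assms(2)] isS_gD isS_gD assms(3) eqq_refl]
      bal_eq[OF b isF_Lc[OF assms(1)] isF_Lc[OF assms(2)] isS_gB isS_gB assms(4) eqq_refl]
    by simp
qed

lemma psi_lemmas:
  fixes \<psi> :: "fa \<Rightarrow> complex"
  assumes add: "\<And>a b. \<psi> (a + b) = \<psi> a + \<psi> b" and z: "\<And>r. r \<in> relI q \<Longrightarrow> \<psi> r = 0"
  shows "\<psi> 0 = 0" "\<And>a b. \<psi> (a - b) = \<psi> a - \<psi> b" "\<And>a b. eqq q a b \<Longrightarrow> \<psi> a = \<psi> b"
    "\<And>f T. \<psi> (sum_list (map f T)) = sum_list (map (\<lambda>x. \<psi> (f x)) T)"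
proof -
  show z0: "\<psi> 0 = 0" using add[of 0 0] by simp
  show d: "\<psi> (a - b) = \<psi> a - \<psi> b" for a b using add[of b "a - b"] by simp
  show "eqq q a b \<Longrightarrow> \<psi> a = \<psi> b" for a b using z[of "a - b"] d[of a b] by (simp add: eqq_def)
  show "\<psi> (sum_list (map f T)) = sum_list (map (\<lambda>x. \<psi> (f x)) T)" for f T
    by (induction T) (simp_all add: z0 add)
qed

lemma sel_fst: "fst (fadd w w') = fst w + fst w'" "fst (lmulF (cst c) w) = cst c * fst w"
  "fst (rmulF q 0 w h) = fst w * h" "feq q w w' \<Longrightarrow> eqq q (fst w) (fst w')"
  by (simp_all add: feq_def)
lemma sel_snd: "snd (fadd w w') = snd w + snd w'" "snd (lmulF (cst c) w) = cst c * snd w"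
  "snd (rmulF q 0 w h) = snd w * h" "feq q w w' \<Longrightarrow> eqq q (snd w) (snd w')"
  by (simp_all add: feq_def)

lemma teq_extract:
  fixes sel :: "form \<Rightarrow> fa"
  assumes te: "teq q T T'"
    and s1: "\<And>w w'. sel (fadd w w') = sel w + sel w'"
    and s2: "\<And>c w. sel (lmulF (cst c) w) = cst c * sel w"
    and s3: "\<And>w h. sel (rmulF q 0 w h) = sel w * h"
    and s4: "\<And>w w'. feq q w w' \<Longrightarrow> eqq q (sel w) (sel w')"
  shows "eqq q (sum_list (map (\<lambda>(w, t). sel w * (t * u)) T)) (sum_list (map (\<lambda>(w, t). sel w * (t * u)) T'))"
proof (rule ccontr)
  let ?x = "sum_list (map (\<lambda>(w, t). sel w * (t * u)) T) - sum_list (map (\<lambda>(w, t). sel w * (t * u)) T')"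
  assume "\<not> ?thesis"
  then have xn: "?x \<notin> relI q" by (simp add: eqq_def)
  obtain \<psi> :: "fa \<Rightarrow> complex" where add: "\<And>a b. \<psi> (a + b) = \<psi> a + \<psi> b"
    and sc: "\<And>c a. \<psi> (cst c * a) = c * \<psi> a" and z: "\<And>r. r \<in> relI q \<Longrightarrow> \<psi> r = 0" and x1: "\<psi> ?x = 1"
    using separation[OF xn] by blast
  note pl = psi_lemmas[of \<psi> q, OF add z]
  define \<phi> where "\<phi> w t = \<psi> (sel w * (t * u))" for w t
  have b: "balanced q \<phi>"
    unfolding balanced_def
  proof (intro conjI allI impI)
    fix w w' s s' assume h: "isF q w \<and> isF q w' \<and> isS q s \<and> isS q s' \<and> feq q w w' \<and> eqq q s s'"
    then show "\<phi> w s = \<phi> w' s'" unfolding \<phi>_def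
      by (intro pl(3) eqq_mult s4 eqq_refl) auto
  next
    fix w w' s show "\<phi> (fadd w w') s = \<phi> w s + \<phi> w' s"
      unfolding \<phi>_def s1 by (simp add: distrib_right add)
  next
    fix w s s' show "\<phi> w (s + s') = \<phi> w s + \<phi> w s'"
      unfolding \<phi>_def by (simp add: distrib_right distrib_left add)
  next
    fix c w s show "\<phi> (lmulF (cst c) w) s = c * \<phi> w s"
      unfolding \<phi>_def s2 by (simp add: mult.assoc sc)
  next
    fix c w s show "\<phi> w (cst c * s) = c * \<phi> w s"
      unfolding \<phi>_def by (simp add: cstn sc)
  next
    fix w h s show "\<phi> (rmulF q 0 w h) s = \<phi> w (h * s)"
      unfolding \<phi>_def s3 by (simp add: mult.assoc)
  qed
  have e: "\<psi> (sum_list (map (\<lambda>(w,t). sel w * (t*u)) S)) = sum_list (map (\<lambda>(w,t). \<phi> w t) S)" for S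
    unfolding \<phi>_def by (induction S) (auto simp: pl(1) add)
  have "sum_list (map (\<lambda>(w, t). \<phi> w t) T) = sum_list (map (\<lambda>(w, t). \<phi> w t) T')"
    using te b unfolding teq_def by blast
  then have "\<psi> (sum_list (map (\<lambda>(w, t). sel w * (t * u)) T)) = \<psi> (sum_list (map (\<lambda>(w, t). sel w * (t * u)) T'))"
    using e[of T] e[of T'] by simp
  then have "\<psi> ?x = 0" by (simp add: pl(2))
  then show False using x1 by simp
qed

lemma fst_La_sum: "fst (La q T) = sum_list (map (\<lambda>(w, t). fst w * (t * gA)) T)"
  by (induction T) auto
lemma snd_La_sum: "snd (La q T) = sum_list (map (\<lambda>(w, t). snd w * (t * gA)) T)"
  by (induction T) auto
lemma fst_Lc_sum: "fst (Lc q T) = sum_list (map (\<lambda>(w, t). fst w * (t * gC)) T)"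
  by (induction T) auto
lemma snd_Lc_sum: "snd (Lc q T) = sum_list (map (\<lambda>(w, t). snd w * (t * gC)) T)"
  by (induction T) auto

lemma teq_La: "teq q T T' \<Longrightarrow> feq q (La q T) (La q T')"
  unfolding feq_def fst_La_sum snd_La_sum
  using teq_extract[of q T T' fst gA, OF _ sel_fst] teq_extract[of q T T' snd gA, OF _ sel_snd] by blast
lemma teq_Lc: "teq q T T' \<Longrightarrow> feq q (Lc q T) (Lc q T')"
  unfolding feq_def fst_Lc_sum snd_Lc_sum
  using teq_extract[of q T T' fst gC, OF _ sel_fst] teq_extract[of q T T' snd gC, OF _ sel_snd] by blast
lemma teq_isT: "teq q T T' \<Longrightarrow> isT q T \<and> isT q T'" by (simp add: teq_def)

lemma starq_gA: "starq q gA = gD" by (simp add: gA_def gD_def starq_wd1)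
lemma starq_gD: "starq q gD = gA" by (simp add: gA_def gD_def starq_wd1)
lemma starq_gB: "starq q gB = - (cst (complex_of_real q) * gC)" by (simp add: gB_def gC_def starq_wd1 Qc_def)
lemma starq_gC: "starq q gC = - (cst (complex_of_real (1/q)) * gB)" by (simp add: gB_def gC_def starq_wd1)

lemma Kid: "eqq q (u * gA * gD * v - cst (complex_of_real (1/q)) * (u * gC * gB * v)) (u * v)"
proof -
  have "eqq q (u * (gA * gD - cst (complex_of_real (1/q)) * gC * gB) * v) (u * 1 * v)"
    by (intro eqq_mult eqq_refl K_rel)
  moreover have "u * (gA * gD - cst (complex_of_real (1/q)) * gC * gB) * v = u * gA * gD * v - cst (complex_of_real (1/q)) * (u * gC * gB * v)"
    by (simp add: algebra_simps cstn)
  ultimately show ?thesis by simp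
qed

definition Lv :: "real \<Rightarrow> fa \<Rightarrow> tens \<Rightarrow> form" where
  "Lv q v T = fsum (map (\<lambda>(w, t). rmulF q 0 w (t * v)) T)"

lemma La_Lv: "La q T = Lv q gA T" by (simp add: La_def Lv_def)
lemma Lc_Lv: "Lc q T = Lv q gC T" by (simp add: Lc_def Lv_def)
lemma fst_Lv_sum: "fst (Lv q v T) = sum_list (map (\<lambda>(w, t). fst w * (t * v)) T)"
  by (induction T) (auto simp: Lv_def)
lemma snd_Lv_sum: "snd (Lv q v T) = sum_list (map (\<lambda>(w, t). snd w * (t * v)) T)"
  by (induction T) (auto simp: Lv_def)

definition mk :: "real \<Rightarrow> form \<Rightarrow> tens" where
  "mk q P = [(rmulF q 1 P gA, gD), (lmulF (cst (complex_of_real (- 1/q))) (rmulF q 1 P gC), gB)]"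

lemma monopole_mk: "monopole q x = mk q (pid q x)" by (simp add: monopole_def mk_def)
lemma dbarS_mk: "dbarS q x = mk q (0, dfree False q x)" by (simp add: dbarS_def mk_def)

lemma mk_Lv_fst: "q \<noteq> 0 \<Longrightarrow> eqq q (fst (Lv q v (mk q P))) (cst (complex_of_real q) * (fst P * v))"
proof -
  assume q: "q \<noteq> 0"
  have "fst (Lv q v (mk q P)) = cst (complex_of_real q) * (fst P * gA * gD * v - cst (complex_of_real (1/q)) * (fst P * gC * gB * v))"
    by (simp add: fst_Lv_sum mk_def cstn algebra_simps cst_uminus)
  then show ?thesis using eqq_cst[OF Kid] by simp
qed

lemma mk_Lv_snd: "q \<noteq> 0 \<Longrightarrow> eqq q (snd (Lv q v (mk q P))) (cst (complex_of_real q) * (snd P * v))"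
proof -
  assume q: "q \<noteq> 0"
  have "snd (Lv q v (mk q P)) = cst (complex_of_real q) * (snd P * gA * gD * v - cst (complex_of_real (1/q)) * (snd P * gC * gB * v))"
    by (simp add: snd_Lv_sum mk_def cstn algebra_simps cst_uminus)
  then show ?thesis using eqq_cst[OF Kid] by simp
qed

lemma mk_snd_only: "snd (Lv q v (mk q P)) = snd (Lv q v (mk q (0, snd P)))"
  by (simp add: snd_Lv_sum mk_def)

lemma mk_isT:
  assumes a: "homq q (-3) (fst P)" and b: "homq q 1 (snd P)"
  shows "isT q (mk q P)"
proof -
  have h: "homq q (-2) (cst c * fst P * u)" "homq q 2 (cst c * snd P * u)" if "homq q 1 u" for c u
    by (rule homq_mult'[OF homq_cst[OF a] that], simp) (rule homq_mult'[OF homq_cst[OF b] that], simp)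
  show ?thesis unfolding mk_def
    using h[OF homq_gA] h[OF homq_gC] homq_cst[OF h(1)[OF homq_gC]] homq_cst[OF h(2)[OF homq_gC]]
    by (simp add: isF_def isS_gD isS_gB)
qed

lemma starq_ft: "q \<noteq> 0 \<Longrightarrow> eqq q (starq q (f * t)) (gA * starq q (f * (t * gA)) + gC * starq q (f * (t * gC)))"
proof -
  assume q: "q \<noteq> 0"
  have "eqq q (starq q (f * t)) (starq q (f * (t * gA * gD + cst (complex_of_real (-1/q)) * (t * gC * gB))))"
    by (intro eqq_starq q eqq_mult eqq_refl t_decomp)
  moreover have "starq q (f * (t * gA * gD + cst (complex_of_real (-1/q)) * (t * gC * gB))) = gA * starq q (f * (t * gA)) + gC * starq q (f * (t * gC))"
    using q by (simp add: distrib_left distrib_right left_diff_distrib right_diff_distrib starq_cst1 starq_add starq_diff starq_uminus starq_mult starq_cst starq_gA starq_gB starq_gC starq_gD cstn cst_uminus)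
  ultimately show ?thesis by simp
qed

definition M2 :: "real \<Rightarrow> fa \<Rightarrow> tens \<Rightarrow> form" where
  "M2 q x T = fsum (map (\<lambda>(w, t). lmulF (hinner q x t) (fstar q w)) T)"

lemma M1_Lv: "fsum (map (\<lambda>(w, t). rmulF q 0 w (hinner q t y)) T) = Lv q (starq q y) T"
  by (simp add: Lv_def hinner_def)

lemma M2_Nil[simp]: "M2 q x [] = (0, 0)" by (simp add: M2_def)
lemma M2_Cons[simp]: "M2 q x ((w, t) # T) = fadd (lmulF (hinner q x t) (fstar q w)) (M2 q x T)" by (simp add: M2_def)

lemma M2_fst:
  assumes q: "q \<noteq> 0"
  shows "eqq q (fst (M2 q x T)) (- (cst (complex_of_real (1/q))) * (x * (gA * starq q (snd (La q T)) + gC * starq q (snd (Lc q T)))))"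
proof (induction T)
  case Nil then show ?case by simp
next
  case (Cons p T)
  obtain w t where p: "p = (w, t)" by (cases p)
  let ?c = "cst (complex_of_real (1/q))"
  have e0: "x * starq q t * (- (?c * starq q (snd w))) = - ?c * (x * starq q (snd w * t))"
    by (simp add: starq_mult cstn)
  have e1: "eqq q (x * starq q t * (- (?c * starq q (snd w)))) (- ?c * (x * (gA * starq q (snd w * (t * gA)) + gC * starq q (snd w * (t * gC)))))"
    unfolding e0 by (intro eqq_mult eqq_refl starq_ft q)
  have e2: "eqq q (fst (M2 q x (p # T))) (- ?c * (x * (gA * starq q (snd w * (t * gA)) + gC * starq q (snd w * (t * gC))))
      + - ?c * (x * (gA * starq q (snd (La q T)) + gC * starq q (snd (Lc q T)))))"
    unfolding p using eqq_add[OF e1 Cons] by (simp add: hinner_def)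
  show ?case using e2 unfolding p by (simp add: starq_add algebra_simps)
qed

lemma M2_snd:
  assumes q: "q \<noteq> 0"
  shows "eqq q (snd (M2 q x T)) (- (cst (complex_of_real q)) * (x * (gA * starq q (fst (La q T)) + gC * starq q (fst (Lc q T)))))"
proof (induction T)
  case Nil then show ?case by simp
next
  case (Cons p T)
  obtain w t where p: "p = (w, t)" by (cases p)
  let ?c = "cst (complex_of_real q)"
  have e0: "x * starq q t * (- (?c * starq q (fst w))) = - ?c * (x * starq q (fst w * t))"
    by (simp add: starq_mult cstn)
  have e1: "eqq q (x * starq q t * (- (?c * starq q (fst w)))) (- ?c * (x * (gA * starq q (fst w * (t * gA)) + gC * starq q (fst w * (t * gC)))))"
    unfolding e0 by (intro eqq_mult eqq_refl starq_ft q)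
  have e2: "eqq q (snd (M2 q x (p # T))) (- ?c * (x * (gA * starq q (fst w * (t * gA)) + gC * starq q (fst w * (t * gC))))
      + - ?c * (x * (gA * starq q (fst (La q T)) + gC * starq q (fst (Lc q T)))))"
    unfolding p using eqq_add[OF e1 Cons] by (simp add: hinner_def Qc_def)
  show ?case using e2 unfolding p by (simp add: starq_add algebra_simps)
qed

lemma eqq_via: "eqq q a a' \<Longrightarrow> eqq q b b' \<Longrightarrow> a' = b' \<Longrightarrow> eqq q a b"
  by (metis eqq_sym eqq_trans)

lemma fst_pid[simp]: "fst (pid q x) = dfree True q x" by (simp add: pid_def)
lemma snd_pid[simp]: "snd (pid q x) = dfree False q x" by (simp add: pid_def)

lemma mono_metric:
  assumes q: "q \<noteq> 0"
  shows "metric_preserving q (monopole q)"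
  unfolding metric_preserving_def
proof (intro allI impI)
  fix x y assume xy: "isS q x \<and> isS q y"
  then have hx: "homq q (-1) x" and hy: "homq q (-1) y" by (auto simp: isS_def)
  let ?c = "complex_of_real q"
  have hys: "homq q 1 (starq q y)" using homq_starq[OF q hy] by simp
  define D where "D = dfree False q y"
  define E where "E = dfree True q y"
  have M1: "fsum (map (\<lambda>(w, t). rmulF q 0 w (hinner q t y)) (monopole q x)) = Lv q (starq q y) (mk q (pid q x))"
    unfolding monopole_mk by (rule M1_Lv)
  have M2': "fsum (map (\<lambda>(w, t). lmulF (hinner q x t) (fstar q w)) (monopole q y)) = M2 q x (monopole q y)"
    by (simp add: M2_def)
  have La_y: "eqq q (snd (La q (monopole q y))) (cst ?c * (D * gA))" "eqq q (fst (La q (monopole q y))) (cst ?c * (E * gA))"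
    using mk_Lv_snd[OF q, of gA "pid q y"] mk_Lv_fst[OF q, of gA "pid q y"] by (simp_all add: La_Lv monopole_mk D_def E_def)
  have Lc_y: "eqq q (snd (Lc q (monopole q y))) (cst ?c * (D * gC))" "eqq q (fst (Lc q (monopole q y))) (cst ?c * (E * gC))"
    using mk_Lv_snd[OF q, of gC "pid q y"] mk_Lv_fst[OF q, of gC "pid q y"] by (simp_all add: Lc_Lv monopole_mk D_def E_def)
  show "feq q (pid q (hinner q x y))
          (fadd (fsum (map (\<lambda>(w, t). rmulF q 0 w (hinner q t y)) (monopole q x)))
                (fsum (map (\<lambda>(w, t). lmulF (hinner q x t) (fstar q w)) (monopole q y))))"
    unfolding feq_iff M1 M2' fst_fadd snd_fadd
  proof
    have l1: "eqq q (dfree True q (x * starq q y)) (cst (complex_of_real (q powi 1)) * (dfree True q x * starq q y) + x * dfree True q (starq q y))"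
      by (rule dfree_mult_hom[OF q hys])
    have l2: "eqq q (dfree True q (starq q y)) (cst (- (?c powi (ee True - (-1)))) * starq q (dfree (\<not> True) q y))"
      by (rule dstar_homq[OF q hy])
    have A: "eqq q (dfree True q (x * starq q y)) (cst ?c * (dfree True q x * starq q y) + - (x * starq q D))"
      using eqq_trans[OF l1 eqq_add[OF eqq_refl eqq_mult[OF eqq_refl l2]]] by (simp add: ee_def D_def cst_uminus)
    have r1: "eqq q (fst (Lv q (starq q y) (mk q (pid q x)))) (cst ?c * (dfree True q x * starq q y))"
      using mk_Lv_fst[OF q, of "starq q y" "pid q x"] by simp
    have r2: "eqq q (fst (M2 q x (monopole q y))) (- (cst (complex_of_real (1/q))) * (x * (gA * starq q (cst ?c * (D * gA)) + gC * starq q (cst ?c * (D * gC)))))"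
      by (rule eqq_trans[OF M2_fst[OF q]]) (intro eqq_mult eqq_add eqq_refl eqq_starq q La_y Lc_y)
    have r6: "- (cst (complex_of_real (1/q))) * (x * (gA * starq q (cst ?c * (D * gA)) + gC * starq q (cst ?c * (D * gC))))
        = - (x * gA * gD * starq q D - cst (complex_of_real (1/q)) * (x * gC * gB * starq q D))"
      using q by (simp add: starq_mult starq_cst starq_cst1 starq_gA starq_gC cstn algebra_simps cst_uminus)
    have r7: "eqq q (fst (M2 q x (monopole q y))) (- (x * starq q D))"
      using eqq_trans[OF r2[unfolded r6] eqq_uminus[OF Kid]] .
    show "eqq q (fst (pid q (hinner q x y))) (fst (Lv q (starq q y) (mk q (pid q x))) + fst (M2 q x (monopole q y)))"
      unfolding fst_pid hinner_def
      by (rule eqq_via[OF A eqq_add[OF r1 r7]]) simp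
  next
    have l1: "eqq q (dfree False q (x * starq q y)) (cst (complex_of_real (q powi 1)) * (dfree False q x * starq q y) + x * dfree False q (starq q y))"
      by (rule dfree_mult_hom[OF q hys])
    have l2: "eqq q (dfree False q (starq q y)) (cst (- (?c powi (ee False - (-1)))) * starq q (dfree (\<not> False) q y))"
      by (rule dstar_homq[OF q hy])
    have A: "eqq q (dfree False q (x * starq q y)) (cst ?c * (dfree False q x * starq q y) + - (cst (?c^2) * (x * starq q E)))"
      using eqq_trans[OF l1 eqq_add[OF eqq_refl eqq_mult[OF eqq_refl l2]]] by (simp add: ee_def E_def cst_uminus cstn)
    have r1: "eqq q (snd (Lv q (starq q y) (mk q (pid q x)))) (cst ?c * (dfree False q x * starq q y))"
      using mk_Lv_snd[OF q, of "starq q y" "pid q x"] by simp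
    have r2: "eqq q (snd (M2 q x (monopole q y))) (- (cst ?c) * (x * (gA * starq q (cst ?c * (E * gA)) + gC * starq q (cst ?c * (E * gC)))))"
      by (rule eqq_trans[OF M2_snd[OF q]]) (intro eqq_mult eqq_add eqq_refl eqq_starq q La_y Lc_y)
    have r6: "- (cst ?c) * (x * (gA * starq q (cst ?c * (E * gA)) + gC * starq q (cst ?c * (E * gC))))
        = - (cst (?c^2) * (x * gA * gD * starq q E - cst (complex_of_real (1/q)) * (x * gC * gB * starq q E)))"
      using q by (simp add: starq_mult starq_cst starq_cst1 starq_gA starq_gC cstn algebra_simps cst_uminus power2_eq_square)
    have r7: "eqq q (snd (M2 q x (monopole q y))) (- (cst (?c^2) * (x * starq q E)))"
      using eqq_trans[OF r2[unfolded r6] eqq_uminus[OF eqq_cst[OF Kid]]] .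
    show "eqq q (snd (pid q (hinner q x y))) (snd (Lv q (starq q y) (mk q (pid q x))) + snd (M2 q x (monopole q y)))"
      unfolding snd_pid hinner_def
      by (rule eqq_via[OF A eqq_add[OF r1 r7]]) simp
  qed
qed

lemma eqq_cancel: "eqq q (a + b) L \<Longrightarrow> eqq q (a' + b') L \<Longrightarrow> eqq q b b' \<Longrightarrow> eqq q a a'"
proof -
  assume h: "eqq q (a + b) L" "eqq q (a' + b') L" "eqq q b b'"
  have "((a + b) - L) - ((a' + b') - L) - (b - b') \<in> relI q"
    using h unfolding eqq_def by (blast intro: relI_diff)
  then show ?thesis unfolding eqq_def by (simp add: algebra_simps)
qed

lemma Lv_Nil[simp]: "Lv q v [] = (0, 0)" by (simp add: Lv_def)
lemma Lv_Cons[simp]: "Lv q v ((w, t) # T) = fadd (fst w * (t * v), snd w * (t * v)) (Lv q v T)" by (simp add: Lv_def)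
lemma Lv_append: "Lv q v (T @ T') = fadd (Lv q v T) (Lv q v T')"
  by (induction T) (auto simp: fadd_def add.assoc)
lemma Lv_lmul: "Lv q v (map (\<lambda>(w, t). (lmulF h w, t)) T) = lmulF h (Lv q v T)"
  by (induction T) (auto simp: fadd_def lmulF_def distrib_left mult.assoc)
lemma Lv_proj: "Lv q v (map (\<lambda>(w, t). (proj01 w, t)) T) = (0, snd (Lv q v T))"
  by (induction T) (auto simp: fadd_def)
lemma Lv_negcst: "fst (Lv q (- (cst c * v)) T) = - (cst c * fst (Lv q v T))"
  by (induction T) (auto simp: fadd_def cstn algebra_simps)

lemma isT_proj: "isT q T \<Longrightarrow> isT q (map (\<lambda>(w, t). (proj01 w, t)) T)"
  by (induction T) (auto simp: isF_def)
lemma homq0_mult: "homq q 0 h \<Longrightarrow> homq q n a \<Longrightarrow> homq q n (h * a)"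
  using homq_mult[of q 0 h n a] by simp
lemma isT_lmul: "homq q 0 h \<Longrightarrow> isT q T \<Longrightarrow> isT q (map (\<lambda>(w, t). (lmulF h w, t)) T)"
  by (induction T) (auto simp: isF_def intro: homq0_mult)

lemma teq_intro_Lv:
  assumes "isT q T" "isT q T'"
    "\<And>v. v = gA \<or> v = gC \<Longrightarrow> eqq q (fst (Lv q v T)) (fst (Lv q v T')) \<and> eqq q (snd (Lv q v T)) (snd (Lv q v T'))"
  shows "teq q T T'"
  using assms(3)[of gA] assms(3)[of gC] by (intro teq_intro assms(1,2)) (simp_all add: feq_def La_Lv Lc_Lv)

context
  fixes q :: real
  assumes q: "q \<noteq> 0"
begin

lemma isT_mono: "isS q s \<Longrightarrow> isT q (monopole q s)"
  unfolding monopole_mk isS_def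
  by (rule mk_isT) (use homq_dfreeT[OF q, of "-1" s] homq_dfreeF[OF q, of "-1" s] in simp_all)

lemma mono_Lv: "eqq q (fst (Lv q v (monopole q s))) (cst (complex_of_real q) * (dfree True q s * v))"
  "eqq q (snd (Lv q v (monopole q s))) (cst (complex_of_real q) * (dfree False q s * v))"
  using mk_Lv_fst[OF q, of v "pid q s"] mk_Lv_snd[OF q, of v "pid q s"] by (simp_all add: monopole_mk)

lemma eqq_via2: "eqq q a a' \<Longrightarrow> eqq q b b' \<Longrightarrow> eqq q a' b' \<Longrightarrow> eqq q a b"
  by (metis eqq_sym eqq_trans)

lemma mono_lc: "left_connection q (monopole q)"
  unfolding left_connection_def
proof (intro conjI allI impI)
  fix s s' assume h: "isS q s \<and> isS q s' \<and> eqq q s s'"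
  show "teq q (monopole q s) (monopole q s')"
    by (rule teq_intro_Lv) (use h isT_mono in \<open>auto intro!: eqq_via2[OF mono_Lv(1) mono_Lv(1)] eqq_via2[OF mono_Lv(2) mono_Lv(2)] eqq_cst eqq_mult eqq_dfree q\<close>)
next
  fix s s' assume h: "isS q s \<and> isS q s'"
  have hs: "isS q (s + s')" using h by (simp add: isS_def homq_add)
  show "teq q (monopole q (s + s')) (monopole q s @ monopole q s')"
  proof (rule teq_intro_Lv)
    fix v :: fa
    show "eqq q (fst (Lv q v (monopole q (s + s')))) (fst (Lv q v (monopole q s @ monopole q s'))) \<and>
          eqq q (snd (Lv q v (monopole q (s + s')))) (snd (Lv q v (monopole q s @ monopole q s')))"
      unfolding Lv_append fst_fadd snd_fadd
      by (intro conjI eqq_via2[OF mono_Lv(1) eqq_add[OF mono_Lv(1) mono_Lv(1)]] eqq_via2[OF mono_Lv(2) eqq_add[OF mono_Lv(2) mono_Lv(2)]])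
        (simp_all add: dfree_add algebra_simps)
  qed (use h hs isT_mono in auto)
next
  fix c s assume h: "isS q s"
  have hs: "isS q (cst c * s)" using h by (simp add: isS_def homq_cst)
  show "teq q (monopole q (cst c * s)) (map (\<lambda>(w, t). (lmulF (cst c) w, t)) (monopole q s))"
  proof (rule teq_intro_Lv)
    fix v :: fa
    show "eqq q (fst (Lv q v (monopole q (cst c * s)))) (fst (Lv q v (map (\<lambda>(w, t). (lmulF (cst c) w, t)) (monopole q s)))) \<and>
          eqq q (snd (Lv q v (monopole q (cst c * s)))) (snd (Lv q v (map (\<lambda>(w, t). (lmulF (cst c) w, t)) (monopole q s))))"
      unfolding Lv_lmul fst_lmulF snd_lmulF
      by (intro conjI eqq_via2[OF mono_Lv(1) eqq_cst[OF mono_Lv(1)]] eqq_via2[OF mono_Lv(2) eqq_cst[OF mono_Lv(2)]])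
        (simp_all add: dfree_cst cstn mult.commute)
  qed (use h hs isT_mono isT_lmul homq_cst[OF homq_one] in \<open>auto simp: isT_lmul\<close>)
next
  fix h s assume hh: "isA q h \<and> isS q s"
  then have h0: "homq q 0 h" and hs: "homq q (-1) s" by (auto simp: isA_def isS_def)
  have hs': "isS q (h * s)" using homq_mult'[OF h0 hs] by (simp add: isS_def)
  have pidh: "isF q (pid q h)" using homq_dfreeT[OF q h0] homq_dfreeF[OF q h0] by (simp add: isF_def)
  show "teq q (monopole q (h * s)) ((pid q h, s) # map (\<lambda>(w, t). (lmulF h w, t)) (monopole q s))"
  proof (rule teq_intro_Lv)
    show "isT q (monopole q (h * s))" using isT_mono[OF hs'] .
    show "isT q ((pid q h, s) # map (\<lambda>(w, t). (lmulF h w, t)) (monopole q s))"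
      using pidh hh isT_lmul[OF h0 isT_mono] by simp
  next
    fix v :: fa
    have cq: "complex_of_real q * complex_of_real q powi (-1) = 1" using q by (simp add: power_int_minus)
    have d: "eqq q (dfree b q (h * s)) (cst (complex_of_real (q powi (-1))) * (dfree b q h * s) + h * dfree b q s)" for b
      by (rule dfree_mult_hom[OF q hs])
    have e: "eqq q (cst (complex_of_real q) * (dfree b q (h * s) * v))
              (dfree b q h * (s * v) + h * (cst (complex_of_real q) * (dfree b q s * v)))" for b
    proof -
      have "eqq q (cst (complex_of_real q) * (dfree b q (h * s) * v))
          (cst (complex_of_real q) * ((cst (complex_of_real (q powi (-1))) * (dfree b q h * s) + h * dfree b q s) * v))"
        by (intro eqq_cst eqq_mult d eqq_refl)
      also have "cst (complex_of_real q) * ((cst (complex_of_real (q powi (-1))) * (dfree b q h * s) + h * dfree b q s) * v)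
          = dfree b q h * (s * v) + h * (cst (complex_of_real q) * (dfree b q s * v))"
        using cq by (simp add: distrib_left distrib_right cstn mult.assoc)
      finally show ?thesis .
    qed
    show "eqq q (fst (Lv q v (monopole q (h * s)))) (fst (Lv q v ((pid q h, s) # map (\<lambda>(w, t). (lmulF h w, t)) (monopole q s)))) \<and>
          eqq q (snd (Lv q v (monopole q (h * s)))) (snd (Lv q v ((pid q h, s) # map (\<lambda>(w, t). (lmulF h w, t)) (monopole q s))))"
      unfolding Lv_Cons Lv_lmul fst_fadd snd_fadd fst_lmulF snd_lmulF
      by (intro conjI eqq_via2[OF mono_Lv(1) eqq_add[OF eqq_refl eqq_mult[OF eqq_refl mono_Lv(1)]]]
          eqq_via2[OF mono_Lv(2) eqq_add[OF eqq_refl eqq_mult[OF eqq_refl mono_Lv(2)]]])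
        (simp_all add: e)
  qed
qed

end

context
  fixes q :: real
  assumes q: "q \<noteq> 0"
begin

lemma isT_dbarS: "isS q s \<Longrightarrow> isT q (dbarS q s)"
  unfolding dbarS_mk isS_def
  by (rule mk_isT) (use homq_dfreeF[OF q, of "-1" s] in simp_all)

lemma mono_01: "has_01_part q (monopole q)"
  unfolding has_01_part_def
proof (intro allI impI)
  fix s assume s: "isS q s"
  show "teq q (map (\<lambda>(w, t). (proj01 w, t)) (monopole q s)) (dbarS q s)"
  proof (rule teq_intro_Lv)
    show "isT q (map (\<lambda>(w, t). (proj01 w, t)) (monopole q s))" by (rule isT_proj[OF isT_mono[OF q s]])
    show "isT q (dbarS q s)" by (rule isT_dbarS[OF s])
  next
    fix v :: fa
    have f: "eqq q (fst (Lv q v (dbarS q s))) 0"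
      using mk_Lv_fst[OF q, of v "(0, dfree False q s)"] by (simp add: dbarS_mk)
    have sn: "snd (Lv q v (monopole q s)) = snd (Lv q v (dbarS q s))"
      unfolding monopole_mk dbarS_mk by (subst mk_snd_only) simp
    show "eqq q (fst (Lv q v (map (\<lambda>(w, t). (proj01 w, t)) (monopole q s)))) (fst (Lv q v (dbarS q s))) \<and>
          eqq q (snd (Lv q v (map (\<lambda>(w, t). (proj01 w, t)) (monopole q s)))) (snd (Lv q v (dbarS q s)))"
      unfolding Lv_proj using eqq_sym[OF f] sn by simp
  qed
qed

lemma mono_chern: "chern_conditions q (monopole q)"
  unfolding chern_conditions_def using mono_lc[OF q] mono_metric[OF q] mono_01 by blast

lemma metric_fst:
  assumes "metric_preserving q N" "isS q x" "isS q y"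
  shows "eqq q (dfree True q (x * starq q y)) (fst (Lv q (starq q y) (N x)) + fst (M2 q x (N y)))"
proof -
  have "feq q (pid q (hinner q x y)) (fadd (Lv q (starq q y) (N x)) (M2 q x (N y)))"
    using assms unfolding metric_preserving_def M1_Lv M2_def by blast
  then show ?thesis by (simp add: feq_def hinner_def)
qed

lemma chern_unique:
  assumes N: "chern_conditions q N" and s: "isS q s"
  shows "teq q (N s) (monopole q s)"
proof -
  have lc: "left_connection q N" and mp: "metric_preserving q N" and h01: "has_01_part q N"
    using N by (auto simp: chern_conditions_def)
  have mpm: "metric_preserving q (monopole q)" by (rule mono_metric[OF q])
  have isTN: "isT q (N y)" if "isS q y" for y
    using lc that unfolding left_connection_def by (meson eqq_refl teq_isT)
  have SND: "eqq q (snd (La q (N y))) (snd (La q (monopole q y))) \<and> eqq q (snd (Lc q (N y))) (snd (Lc q (monopole q y)))"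
    if y: "isS q y" for y
  proof -
    have t: "teq q (map (\<lambda>(w, t). (proj01 w, t)) (N y)) (dbarS q y)" using h01 y unfolding has_01_part_def by blast
    have sn: "snd (Lv q v (monopole q y)) = snd (Lv q v (dbarS q y))" for v
      unfolding monopole_mk dbarS_mk by (subst mk_snd_only) simp
    show ?thesis using teq_La[OF t] teq_Lc[OF t] sn[of gA] sn[of gC]
      by (simp add: feq_def La_Lv Lc_Lv Lv_proj)
  qed
  have M2eq: "eqq q (fst (M2 q s (N y))) (fst (M2 q s (monopole q y)))" if y: "isS q y" for y
  proof -
    have "eqq q (- (cst (complex_of_real (1/q))) * (s * (gA * starq q (snd (La q (N y))) + gC * starq q (snd (Lc q (N y))))))
                (- (cst (complex_of_real (1/q))) * (s * (gA * starq q (snd (La q (monopole q y))) + gC * starq q (snd (Lc q (monopole q y))))))"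
      using SND[OF y] by (intro eqq_mult eqq_add eqq_refl eqq_starq q) auto
    then show ?thesis using M2_fst[OF q, of s "N y"] M2_fst[OF q, of s "monopole q y"] by (meson eqq_sym eqq_trans)
  qed
  have c1: "eqq q (fst (Lv q (starq q y) (N s))) (fst (Lv q (starq q y) (monopole q s)))" if y: "isS q y" for y
    by (rule eqq_cancel[OF eqq_sym[OF metric_fst[OF mp s y]] eqq_sym[OF metric_fst[OF mpm s y]] M2eq[OF y]])
  have fa: "eqq q (fst (La q (N s))) (fst (La q (monopole q s)))"
    using c1[OF isS_gD] by (simp add: starq_gD La_Lv)
  have fc0: "eqq q (- (cst (complex_of_real q) * fst (Lc q (N s)))) (- (cst (complex_of_real q) * fst (Lc q (monopole q s))))"
    using c1[OF isS_gB] by (simp add: starq_gB Lv_negcst Lc_Lv)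
  have fc: "eqq q (fst (Lc q (N s))) (fst (Lc q (monopole q s)))"
    using eqq_cst[OF fc0, of "- complex_of_real (1/q)"] q by (simp add: cstn cst_uminus)
  show ?thesis
    by (rule teq_intro[OF isTN[OF s] isT_mono[OF q s]]) (use fa fc SND[OF s] in \<open>simp_all add: feq_def\<close>)
qed

end

theorem mainTheorem14:
  fixes q :: real
  assumes "q \<noteq> 0"
  shows "chern_conditions q (monopole q) \<and>
         (\<forall>N. chern_conditions q N \<longrightarrow> (\<forall>s. isS q s \<longrightarrow> teq q (N s) (monopole q s)))"
  using mono_chern[OF assms] chern_unique[OF assms] by blast

end
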